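(* Let $R_1,\dots,R_n$ ($n\ge2$) be i.i.d. nonnegative random variables with pdf $f_R$, and $\Theta_1,\dots,\Theta_n$ i.i.d. uniform on $[0,2\pi)$, independent of the $R_i$. Let $S_n=\sum_{i=1}^n R_i$ and $Z_n=\sqrt{\left(\sum_{i=1}^n R_i\cos\Theta_i\right)^2+\left(\sum_{i=1}^n R_i\sin\Theta_i\right)^2}$. Then the joint pdf of $(S_n,Z_n)$ is the $2(n-1)$-fold integral $$f_{S_n,Z_n}(s,z)=\frac{4z}{(2\pi)^n}\int\!\cdots\!\int_{\mathcal{R}}\frac{f_R(s-J_n)\prod_{i=1}^{n-1}f_R(x_i)}{\sqrt{\left(z^2-(s-J_n-K_n)^2\right)\left((s-J_n+K_n)^2-z^2\right)}}\,\mathrm{d}\boldsymbol{x}\,\mathrm{d}\boldsymbol{\xi},$$ where $\boldsymbol{x}=(x_1,\dots,x_{n-1})$, $\boldsymbol{\xi}=(\xi_1,\dots,\xi_{n-1})$, $J_n=\sum_{i=1}^{n-1}x_i$, $K_n=\sqrt{\sum_{i,j=1}^{n-1}x_ix_j\cos(\xi_i-\xi_j)}$, and $\mathcal{R}$ is the region where $0\le x_i<\infty$ and $0\le\xi_i<2\pi$ for $1\le i\le n-1$, and $|s-J_n-K_n|\le z\le s-J_n+K_n$. *)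

theory Defs
  imports "HOL-Probability.Probability"
begin

text \<open>The claimed joint density of (S_n, Z_n), as a 2(n-1)-fold (nonnegative)
  Lebesgue integral. Indices 1..n-1 of the paper are rendered as 0..n-2, i.e. {..<n-1}.\<close>

definition J_n :: "nat \<Rightarrow> (nat \<Rightarrow> real) \<Rightarrow> real" where
  "J_n n x = (\<Sum>i<n-1. x i)"

definition K_n :: "nat \<Rightarrow> (nat \<Rightarrow> real) \<Rightarrow> (nat \<Rightarrow> real) \<Rightarrow> real" where
  "K_n n x \<xi> = sqrt (\<Sum>i<n-1. \<Sum>j<n-1. x i * x j * cos (\<xi> i - \<xi> j))"

definition region :: "nat \<Rightarrow> real \<Rightarrow> real \<Rightarrow> (nat \<Rightarrow> real) \<Rightarrow> (nat \<Rightarrow> real) \<Rightarrow> bool" where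
  "region n s z x \<xi> \<longleftrightarrow>
     (\<forall>i<n-1. 0 \<le> x i \<and> 0 \<le> \<xi> i \<and> \<xi> i < 2*pi) \<and>
     \<bar>s - J_n n x - K_n n x \<xi>\<bar> \<le> z \<and> z \<le> s - J_n n x + K_n n x \<xi>"

definition joint_density :: "(real \<Rightarrow> real) \<Rightarrow> nat \<Rightarrow> real \<times> real \<Rightarrow> ennreal" where
  "joint_density f n = (\<lambda>(s, z).
     ennreal (4 * z / (2*pi)^n) *
     (\<integral>\<^sup>+ x. \<integral>\<^sup>+ \<xi>.
        indicator {(x, \<xi>). region n s z x \<xi>} (x, \<xi>) *
        ennreal (f (s - J_n n x) * (\<Prod>i<n-1. f (x i)) /
          sqrt ((z\<^sup>2 - (s - J_n n x - K_n n x \<xi>)\<^sup>2) * ((s - J_n n x + K_n n x \<xi>)\<^sup>2 - z\<^sup>2)))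
      \<partial>(PiM {..<n-1} (\<lambda>_. lborel)) \<partial>(PiM {..<n-1} (\<lambda>_. lborel))))"

end

theory Submission
  imports Defs
begin
lemma subst_half:
  fixes K r :: real and h :: "real \<Rightarrow> ennreal"
  assumes K: "K > 0" and r: "r > 0" and rK: "r \<noteq> K"
    and hm[measurable]: "h \<in> borel_measurable borel"
  shows "(\<integral>\<^sup>+t. h (sqrt (K\<^sup>2 + r\<^sup>2 - 2*K*r*cos t)) * indicator {0..pi} t \<partial>lborel)
       = (\<integral>\<^sup>+z. h z * ennreal (2*z / sqrt ((z\<^sup>2 - (r-K)\<^sup>2) * ((r+K)\<^sup>2 - z\<^sup>2))) * indicator {\<bar>r-K\<bar>..r+K} z \<partial>lborel)"
proof -
  define q where "q t = K\<^sup>2 + r\<^sup>2 - 2*K*r*cos t" for t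
  define g where "g t = sqrt (q t)" for t
  define dg where "dg t = K * r * sin t / g t" for t
  define F where "F z = h z * ennreal (2*z / sqrt ((z\<^sup>2 - (r-K)\<^sup>2) * ((r+K)\<^sup>2 - z\<^sup>2)))" for z
  have qge: "q t \<ge> (r-K)\<^sup>2" for t
  proof -
    have "q t - (r-K)\<^sup>2 = 2*K*r*(1 - cos t)" by (simp add: q_def power2_eq_square algebra_simps)
    moreover have "2*K*r*(1 - cos t) \<ge> 0" using K r by (simp add: mult_nonneg_nonneg)
    ultimately show ?thesis by linarith
  qed
  have qpos: "q t > 0" for t
  proof -
    have "(r-K)\<^sup>2 > 0" using rK by simp
    then show ?thesis using qge[of t] by linarith
  qed
  have gpos: "g t > 0" for t using qpos[of t] by (simp add: g_def)
  have derivg: "(g has_real_derivative dg t) (at t)" for t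
  proof -
    have dq: "(q has_real_derivative 2*K * r * sin t) (at t)"
      unfolding q_def by (auto intro!: derivative_eq_intros)
    have "((\<lambda>t. sqrt (q t)) has_real_derivative inverse (sqrt (q t)) / 2 * (2*K * r * sin t)) (at t)"
      by (rule DERIV_chain2[OF DERIV_real_sqrt[OF qpos[of t]] dq])
    moreover have "inverse (sqrt (q t)) / 2 * (2*K * r * sin t) = dg t"
      by (simp add: dg_def g_def field_simps)
    moreover have "g = (\<lambda>t. sqrt (q t))" by (rule ext) (simp add: g_def)
    ultimately show ?thesis by simp
  qed
  have contg: "continuous_on UNIV g"
    using derivg by (meson DERIV_isCont continuous_at_imp_continuous_on)
  have contdg: "continuous_on {0..pi} dg"
    unfolding dg_def using contg gpos
    by (auto intro!: continuous_intros continuous_on_subset[OF contg] simp: less_imp_neq[symmetric])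
  have dgnn: "0 \<le> dg t" if "t \<in> {0..pi}" for t
    using that gpos[of t] K r sin_ge_zero[of t] by (simp add: dg_def)
  have g0: "g 0 = \<bar>r-K\<bar>"
    unfolding g_def q_def by (simp add: power2_eq_square algebra_simps flip: real_sqrt_abs)
  have gpi: "g pi = r+K"
  proof -
    have "q pi = (r+K)\<^sup>2" by (simp add: q_def power2_eq_square algebra_simps)
    then show ?thesis using K r by (simp add: g_def)
  qed
  have Fm[measurable]: "F \<in> borel_measurable borel" unfolding F_def by measurable
  have aux: "(\<integral>\<^sup>+z. F z * indicator {g 0..g pi} z \<partial>lborel) = (\<integral>\<^sup>+t. F (g t) * ennreal (dg t) * indicator {0..pi} t \<partial>lborel)"
    by (rule nn_integral_substitution_aux[OF Fm _ derivg contdg dgnn]) (auto simp: pi_gt_zero)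
  have key: "F (g t) * ennreal (dg t) = h (g t)" if "t \<in> {0<..<pi}" for t
  proof -
    have st: "sin t > 0" using that sin_gt_zero by auto
    have gsq: "(g t)\<^sup>2 = q t" using qpos[of t] by (simp add: g_def)
    have D: "((g t)\<^sup>2 - (r-K)\<^sup>2) * ((r+K)\<^sup>2 - (g t)\<^sup>2) = (2*K * r * sin t)\<^sup>2"
    proof -
      have "((g t)\<^sup>2 - (r-K)\<^sup>2) * ((r+K)\<^sup>2 - (g t)\<^sup>2) = 4*K\<^sup>2*r\<^sup>2*(1 - (cos t)\<^sup>2)"
        unfolding gsq q_def by (simp add: power2_eq_square algebra_simps)
      also have "\<dots> = (2*K * r * sin t)\<^sup>2" by (simp add: sin_squared_eq power_mult_distrib)
      finally show ?thesis .
    qed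
    have sD: "sqrt (((g t)\<^sup>2 - (r-K)\<^sup>2) * ((r+K)\<^sup>2 - (g t)\<^sup>2)) = 2*K * r * sin t"
      unfolding D using K r st by simp
    have "ennreal (2 * g t / sqrt (((g t)\<^sup>2 - (r-K)\<^sup>2) * ((r+K)\<^sup>2 - (g t)\<^sup>2))) * ennreal (dg t)
        = ennreal (2 * g t / (2*K * r * sin t) * (K * r * sin t / g t))"
      unfolding sD dg_def using K r st gpos[of t]
      by (subst ennreal_mult) (auto intro!: divide_nonneg_nonneg mult_nonneg_nonneg)
    also have "\<dots> = 1" using K r st gpos[of t] by (simp add: field_simps)
    finally show ?thesis by (simp add: F_def mult.assoc)
  qed
  have "(\<integral>\<^sup>+t. F (g t) * ennreal (dg t) * indicator {0..pi} t \<partial>lborel)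
      = (\<integral>\<^sup>+t. h (g t) * indicator {0..pi} t \<partial>lborel)"
  proof (rule nn_integral_cong_AE)
    show "AE t in lborel. F (g t) * ennreal (dg t) * indicator {0..pi} t = h (g t) * indicator {0..pi} t"
      using AE_lborel_singleton[of 0] AE_lborel_singleton[of pi]
    proof eventually_elim
      case (elim t) then show ?case using key[of t] by (cases "t \<in> {0..pi}") auto
    qed
  qed
  then have A: "(\<integral>\<^sup>+z. F z * indicator {\<bar>r-K\<bar>..r+K} z \<partial>lborel) = (\<integral>\<^sup>+t. h (g t) * indicator {0..pi} t \<partial>lborel)"
    using aux unfolding g0 gpi by simp
  show ?thesis using A[symmetric] unfolding F_def g_def q_def .
qed

lemma lborel_shift:
  fixes g :: "real \<Rightarrow> ennreal"
  assumes [measurable]: "g \<in> borel_measurable borel"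
  shows "(\<integral>\<^sup>+x. g x \<partial>lborel) = (\<integral>\<^sup>+x. g (t + x) \<partial>lborel)"
  using nn_integral_real_affine[where c=1 and t=t and f=g] by simp

lemma lborel_reflect:
  fixes g :: "real \<Rightarrow> ennreal"
  assumes [measurable]: "g \<in> borel_measurable borel"
  shows "(\<integral>\<^sup>+x. g x \<partial>lborel) = (\<integral>\<^sup>+x. g (t - x) \<partial>lborel)"
  using nn_integral_real_affine[where c="-1" and t=t and f=g] by simp

lemma shift_periodic:
  fixes P :: "real \<Rightarrow> ennreal" and \<alpha> :: real
  assumes Pm[measurable]: "P \<in> borel_measurable borel"
    and per: "\<And>t. P (t - 2*pi) = P t"
    and \<alpha>: "0 \<le> \<alpha>" "\<alpha> < 2*pi"
  shows "(\<integral>\<^sup>+\<phi>. P (\<phi> - \<alpha>) * indicator {0..<2*pi} \<phi> \<partial>lborel) = (\<integral>\<^sup>+t. P t * indicator {0..<2*pi} t \<partial>lborel)"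
proof -
  have split1: "indicator {0..<2*pi} \<phi> = (indicator {0..<\<alpha>} \<phi> + indicator {\<alpha>..<2*pi} \<phi> :: ennreal)" for \<phi>
    using \<alpha> by (auto simp: indicator_def)
  have split2: "indicator {0..<2*pi} t = (indicator {0..<2*pi-\<alpha>} t + indicator {2*pi-\<alpha>..<2*pi} t :: ennreal)" for t
    using \<alpha> by (auto simp: indicator_def)
  have e1: "(\<integral>\<^sup>+\<phi>. P (\<phi> - \<alpha>) * indicator {\<alpha>..<2*pi} \<phi> \<partial>lborel) = (\<integral>\<^sup>+t. P t * indicator {0..<2*pi-\<alpha>} t \<partial>lborel)"
    by (subst lborel_shift[where t="\<alpha>"]) (auto intro!: nn_integral_cong simp: indicator_def algebra_simps)
  have e2: "(\<integral>\<^sup>+\<phi>. P (\<phi> - \<alpha>) * indicator {0..<\<alpha>} \<phi> \<partial>lborel) = (\<integral>\<^sup>+t. P t * indicator {2*pi-\<alpha>..<2*pi} t \<partial>lborel)"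
    by (subst lborel_shift[where t="\<alpha> - 2*pi"]) (use per in \<open>auto intro!: nn_integral_cong simp: indicator_def algebra_simps\<close>)
  have "(\<integral>\<^sup>+\<phi>. P (\<phi> - \<alpha>) * indicator {0..<2*pi} \<phi> \<partial>lborel)
      = (\<integral>\<^sup>+\<phi>. P (\<phi> - \<alpha>) * indicator {0..<\<alpha>} \<phi> + P (\<phi> - \<alpha>) * indicator {\<alpha>..<2*pi} \<phi> \<partial>lborel)"
    unfolding split1 by (simp add: distrib_left)
  also have "\<dots> = (\<integral>\<^sup>+\<phi>. P (\<phi> - \<alpha>) * indicator {0..<\<alpha>} \<phi> \<partial>lborel) + (\<integral>\<^sup>+\<phi>. P (\<phi> - \<alpha>) * indicator {\<alpha>..<2*pi} \<phi> \<partial>lborel)"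
    by (rule nn_integral_add) auto
  also have "\<dots> = (\<integral>\<^sup>+t. P t * indicator {2*pi-\<alpha>..<2*pi} t \<partial>lborel) + (\<integral>\<^sup>+t. P t * indicator {0..<2*pi-\<alpha>} t \<partial>lborel)"
    unfolding e1 e2 ..
  also have "\<dots> = (\<integral>\<^sup>+t. P t * indicator {2*pi-\<alpha>..<2*pi} t + P t * indicator {0..<2*pi-\<alpha>} t \<partial>lborel)"
    by (rule nn_integral_add[symmetric]) auto
  also have "\<dots> = (\<integral>\<^sup>+t. P t * indicator {0..<2*pi} t \<partial>lborel)"
    unfolding split2 by (simp add: distrib_left add.commute)
  finally show ?thesis .
qed

lemma circle_half:
  fixes P :: "real \<Rightarrow> ennreal"
  assumes Pm[measurable]: "P \<in> borel_measurable borel"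
    and sym: "\<And>t. P (2*pi - t) = P t"
  shows "(\<integral>\<^sup>+t. P t * indicator {0..<2*pi} t \<partial>lborel) = 2 * (\<integral>\<^sup>+t. P t * indicator {0..pi} t \<partial>lborel)"
proof -
  have pp: "pi < 2*pi" using pi_gt_zero by simp
  have split: "indicator {0..<2*pi} t = (indicator {0..pi} t + indicator {pi<..<2*pi} t :: ennreal)" for t
  proof (cases "t \<le> pi")
    case True then have "t < 2*pi" using pi_gt_zero by linarith
    with True show ?thesis by (simp add: indicator_def)
  next
    case False then show ?thesis by (simp add: indicator_def)
  qed
  have e: "(\<integral>\<^sup>+t. P t * indicator {pi<..<2*pi} t \<partial>lborel) = (\<integral>\<^sup>+t. P t * indicator {0..pi} t \<partial>lborel)"
  proof -
    have "(\<integral>\<^sup>+t. P t * indicator {pi<..<2*pi} t \<partial>lborel) = (\<integral>\<^sup>+t. P t * indicator {0<..<pi} t \<partial>lborel)"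
      by (subst lborel_reflect[where t="2*pi"]) (auto intro!: nn_integral_cong simp: indicator_def sym)
    also have "\<dots> = (\<integral>\<^sup>+t. P t * indicator {0..pi} t \<partial>lborel)"
      by (rule nn_integral_cong_AE) (use AE_lborel_singleton[of 0] AE_lborel_singleton[of pi] in \<open>eventually_elim, auto simp: indicator_def\<close>)
    finally show ?thesis .
  qed
  have "(\<integral>\<^sup>+t. P t * indicator {0..<2*pi} t \<partial>lborel) = (\<integral>\<^sup>+t. P t * indicator {0..pi} t + P t * indicator {pi<..<2*pi} t \<partial>lborel)"
    unfolding split by (simp add: distrib_left)
  also have "\<dots> = (\<integral>\<^sup>+t. P t * indicator {0..pi} t \<partial>lborel) + (\<integral>\<^sup>+t. P t * indicator {pi<..<2*pi} t \<partial>lborel)"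
    by (rule nn_integral_add) auto
  finally show ?thesis unfolding e by (simp only: mult_2)
qed

lemma circle_subst:
  fixes K r a b :: real and h :: "real \<Rightarrow> ennreal"
  assumes K: "K > 0" and r: "r > 0" and rK: "r \<noteq> K" and ab: "a\<^sup>2 + b\<^sup>2 = K\<^sup>2"
    and hm[measurable]: "h \<in> borel_measurable borel"
  shows "(\<integral>\<^sup>+\<phi>. h (sqrt ((a + r * cos \<phi>)\<^sup>2 + (b + r * sin \<phi>)\<^sup>2)) * indicator {0..<2*pi} \<phi> \<partial>lborel)
       = 2 * (\<integral>\<^sup>+z. h z * ennreal (2*z / sqrt ((z\<^sup>2 - (r-K)\<^sup>2) * ((r+K)\<^sup>2 - z\<^sup>2))) * indicator {\<bar>r-K\<bar>..r+K} z \<partial>lborel)"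
proof -
  have "(a/K)\<^sup>2 + (b/K)\<^sup>2 = 1" using ab K by (simp add: power_divide field_simps)
  then obtain \<alpha> where \<alpha>: "0 \<le> \<alpha>" "\<alpha> < 2*pi" "a/K = cos \<alpha>" "b/K = sin \<alpha>"
    by (rule sincos_total_2pi)
  have a: "a = K * cos \<alpha>" and b: "b = K * sin \<alpha>" using \<alpha> K by (auto simp: field_simps)
  define P where "P t = h (sqrt (K\<^sup>2 + r\<^sup>2 + 2*K*r*cos t))" for t
  have Pm[measurable]: "P \<in> borel_measurable borel" unfolding P_def by measurable
  have eq: "(a + r * cos \<phi>)\<^sup>2 + (b + r * sin \<phi>)\<^sup>2 = K\<^sup>2 + r\<^sup>2 + 2*K*r*cos (\<phi> - \<alpha>)" for \<phi>
  proof -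
    have "(a + r * cos \<phi>)\<^sup>2 + (b + r * sin \<phi>)\<^sup>2
        = K\<^sup>2 * ((sin \<alpha>)\<^sup>2 + (cos \<alpha>)\<^sup>2) + r\<^sup>2 * ((sin \<phi>)\<^sup>2 + (cos \<phi>)\<^sup>2) + 2*K*r*(cos \<phi> * cos \<alpha> + sin \<phi> * sin \<alpha>)"
      unfolding a b by algebra
    then show ?thesis by (simp add: cos_diff)
  qed
  have "(\<integral>\<^sup>+\<phi>. h (sqrt ((a + r * cos \<phi>)\<^sup>2 + (b + r * sin \<phi>)\<^sup>2)) * indicator {0..<2*pi} \<phi> \<partial>lborel)
      = (\<integral>\<^sup>+\<phi>. P (\<phi> - \<alpha>) * indicator {0..<2*pi} \<phi> \<partial>lborel)"
    unfolding eq P_def ..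
  also have "\<dots> = (\<integral>\<^sup>+t. P t * indicator {0..<2*pi} t \<partial>lborel)"
    by (rule shift_periodic[OF Pm _ \<alpha>(1,2)]) (simp add: P_def cos_diff)
  also have "\<dots> = 2 * (\<integral>\<^sup>+t. P t * indicator {0..pi} t \<partial>lborel)"
    by (rule circle_half[OF Pm]) (simp add: P_def cos_diff)
  also have "(\<integral>\<^sup>+t. P t * indicator {0..pi} t \<partial>lborel) = (\<integral>\<^sup>+t. h (sqrt (K\<^sup>2 + r\<^sup>2 - 2*K*r*cos t)) * indicator {0..pi} t \<partial>lborel)"
    by (subst lborel_reflect[where t="pi"]) (auto intro!: nn_integral_cong simp: indicator_def P_def)
  also have "\<dots> = (\<integral>\<^sup>+z. h z * ennreal (2*z / sqrt ((z\<^sup>2 - (r-K)\<^sup>2) * ((r+K)\<^sup>2 - z\<^sup>2))) * indicator {\<bar>r-K\<bar>..r+K} z \<partial>lborel)"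
    by (rule subst_half[OF K r rK hm])
  finally show ?thesis .
qed

definition uu :: "real \<Rightarrow> real" where "uu \<phi> = indicator {0..<2*pi} \<phi> / (2*pi)"

lemma uu_meas[measurable]: "uu \<in> borel_measurable borel"
  unfolding uu_def by measurable

lemma uu_nonneg: "0 \<le> uu \<phi>" by (simp add: uu_def)

lemma inner_r:
  fixes J K a b r :: real and h :: "real \<times> real \<Rightarrow> ennreal" and f :: "real \<Rightarrow> real"
  assumes K: "K > 0" and ab: "a\<^sup>2 + b\<^sup>2 = K\<^sup>2"
    and hm[measurable]: "h \<in> borel_measurable (lborel \<Otimes>\<^sub>M lborel)"
    and fnn: "\<And>x. 0 \<le> f x"
    and r0: "r \<noteq> 0" and rK: "r \<noteq> K"
  shows "(\<integral>\<^sup>+z. h (J + r, z) * indicator {z. \<bar>r - K\<bar> \<le> z \<and> z \<le> r + K} z *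
            ennreal (2 * z * f r / (pi * sqrt ((z\<^sup>2 - (r - K)\<^sup>2) * ((r + K)\<^sup>2 - z\<^sup>2)))) \<partial>lborel)
       = ennreal (f r * indicator {0..} r) * (\<integral>\<^sup>+\<phi>. ennreal (uu \<phi>) * h (J + r, sqrt ((a + r * cos \<phi>)\<^sup>2 + (b + r * sin \<phi>)\<^sup>2)) \<partial>lborel)"
proof (cases "r < 0")
  case True
  have "{z. \<bar>r - K\<bar> \<le> z \<and> z \<le> r + K} = {}" using True K by auto
  then show ?thesis using True by simp
next
  case False
  then have r: "r > 0" using r0 by simp
  have hm1[measurable]: "(\<lambda>z. h (J + r, z)) \<in> borel_measurable borel" by measurable
  define D where "D z = (z\<^sup>2 - (r - K)\<^sup>2) * ((r + K)\<^sup>2 - z\<^sup>2)" for z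
  have eq1: "h (J + r, z) * indicator {z. \<bar>r - K\<bar> \<le> z \<and> z \<le> r + K} z * ennreal (2 * z * f r / (pi * sqrt (D z)))
     = ennreal (f r / pi) * (h (J + r, z) * ennreal (2 * z / sqrt (D z)) * indicator {\<bar>r-K\<bar>..r+K} z)" for z
  proof (cases "\<bar>r - K\<bar> \<le> z \<and> z \<le> r + K")
    case True
    then have z: "z \<ge> 0" by linarith
    have "(r - K)\<^sup>2 \<le> z\<^sup>2"
      using power_mono[of "\<bar>r - K\<bar>" z 2] True by simp
    moreover have "z\<^sup>2 \<le> (r + K)\<^sup>2"
      using power_mono[of z "r + K" 2] True z by simp
    ultimately have Dnn: "D z \<ge> 0" unfolding D_def by (intro mult_nonneg_nonneg) auto
    have "ennreal (2 * z * f r / (pi * sqrt (D z))) = ennreal (f r / pi) * ennreal (2 * z / sqrt (D z))"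
      using z fnn[of r] Dnn by (subst ennreal_mult[symmetric]) (auto intro!: arg_cong[where f=ennreal])
    then show ?thesis using True by (simp add: indicator_def mult_ac)
  qed (auto simp: indicator_def)
  define X where "X = (\<integral>\<^sup>+\<phi>. ennreal (uu \<phi>) * h (J + r, sqrt ((a + r * cos \<phi>)\<^sup>2 + (b + r * sin \<phi>)\<^sup>2)) \<partial>lborel)"
  define Z where "Z = (\<integral>\<^sup>+z. h (J + r, z) * ennreal (2 * z / sqrt (D z)) * indicator {\<bar>r-K\<bar>..r+K} z \<partial>lborel)"
  have s1: "(\<integral>\<^sup>+z. h (J + r, z) * indicator {z. \<bar>r - K\<bar> \<le> z \<and> z \<le> r + K} z *
            ennreal (2 * z * f r / (pi * sqrt ((z\<^sup>2 - (r - K)\<^sup>2) * ((r + K)\<^sup>2 - z\<^sup>2)))) \<partial>lborel)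
      = ennreal (f r / pi) * Z"
    unfolding eq1[unfolded D_def] D_def Z_def by (rule nn_integral_cmult) measurable
  have s2: "2 * Z = (\<integral>\<^sup>+\<phi>. h (J + r, sqrt ((a + r * cos \<phi>)\<^sup>2 + (b + r * sin \<phi>)\<^sup>2)) * indicator {0..<2*pi} \<phi> \<partial>lborel)"
    unfolding circle_subst[OF K r rK ab hm1] D_def Z_def ..
  have s3: "(\<integral>\<^sup>+\<phi>. h (J + r, sqrt ((a + r * cos \<phi>)\<^sup>2 + (b + r * sin \<phi>)\<^sup>2)) * indicator {0..<2*pi} \<phi> \<partial>lborel)
      = ennreal (2*pi) * X"
  proof -
    have "ennreal (2*pi) * ennreal (uu \<phi>) = indicator {0..<2*pi} \<phi>" for \<phi>
      by (subst ennreal_mult[symmetric]) (auto simp: uu_def indicator_def)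
    then show ?thesis unfolding X_def
      by (subst nn_integral_cmult[symmetric]) (auto simp: mult.assoc[symmetric] mult.commute intro!: nn_integral_cong)
  qed
  have "2 * Z = 2 * (ennreal pi * X)"
    unfolding s2 s3 by (simp add: ennreal_mult mult.assoc)
  then have ZX: "Z = ennreal pi * X"
    by (subst (asm) ennreal_mult_cancel_left) auto
  have "ennreal (f r / pi) * Z = ennreal (f r / pi * pi) * X"
    unfolding ZX using fnn[of r] by (simp add: ennreal_mult[symmetric] mult.assoc[symmetric] del: times_divide_eq_left)
  also have "\<dots> = ennreal (f r * indicator {0..} r) * X"
    using r by simp
  finally show ?thesis using s1 unfolding X_def by simp
qed

lemma inner:
  fixes J K a b :: real and h :: "real \<times> real \<Rightarrow> ennreal" and f :: "real \<Rightarrow> real"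
  assumes K: "K > 0" and ab: "a\<^sup>2 + b\<^sup>2 = K\<^sup>2"
    and hm[measurable]: "h \<in> borel_measurable (lborel \<Otimes>\<^sub>M lborel)"
    and fnn: "\<And>x. 0 \<le> f x" and fm[measurable]: "f \<in> borel_measurable borel"
  shows "(\<integral>\<^sup>+p. h p * indicator {p. \<bar>fst p - J - K\<bar> \<le> snd p \<and> snd p \<le> fst p - J + K} p *
            ennreal (2 * snd p * f (fst p - J) / (pi * sqrt (((snd p)\<^sup>2 - (fst p - J - K)\<^sup>2) * ((fst p - J + K)\<^sup>2 - (snd p)\<^sup>2))))
          \<partial>(lborel \<Otimes>\<^sub>M lborel))
       = (\<integral>\<^sup>+\<phi>. ennreal (uu \<phi>) * (\<integral>\<^sup>+r. ennreal (f r * indicator {0..} r) *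
            h (J + r, sqrt ((a + r * cos \<phi>)\<^sup>2 + (b + r * sin \<phi>)\<^sup>2)) \<partial>lborel) \<partial>lborel)"
proof -
  define \<Psi> where "\<Psi> s z = h (s, z) * indicator {z. \<bar>s - J - K\<bar> \<le> z \<and> z \<le> s - J + K} z *
            ennreal (2 * z * f (s - J) / (pi * sqrt ((z\<^sup>2 - (s - J - K)\<^sup>2) * ((s - J + K)\<^sup>2 - z\<^sup>2))))" for s z
  have \<Psi>m[measurable]: "(\<lambda>(s, z). \<Psi> s z) \<in> borel_measurable (lborel \<Otimes>\<^sub>M lborel)"
    unfolding \<Psi>_def by measurable
  define H where "H r \<phi> = h (J + r, sqrt ((a + r * cos \<phi>)\<^sup>2 + (b + r * sin \<phi>)\<^sup>2))" for r \<phi>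
  have Hm[measurable]: "(\<lambda>(r, \<phi>). H r \<phi>) \<in> borel_measurable (lborel \<Otimes>\<^sub>M lborel)"
    unfolding H_def by measurable
  have "(\<integral>\<^sup>+p. h p * indicator {p. \<bar>fst p - J - K\<bar> \<le> snd p \<and> snd p \<le> fst p - J + K} p *
            ennreal (2 * snd p * f (fst p - J) / (pi * sqrt (((snd p)\<^sup>2 - (fst p - J - K)\<^sup>2) * ((fst p - J + K)\<^sup>2 - (snd p)\<^sup>2))))
          \<partial>(lborel \<Otimes>\<^sub>M lborel)) = (\<integral>\<^sup>+p. (\<lambda>(s, z). \<Psi> s z) p \<partial>(lborel \<Otimes>\<^sub>M lborel))"
    by (rule nn_integral_cong) (auto simp: \<Psi>_def indicator_def split: prod.splits)
  also have "\<dots> = (\<integral>\<^sup>+s. \<integral>\<^sup>+z. \<Psi> s z \<partial>lborel \<partial>lborel)"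
    by (subst lborel.nn_integral_fst[symmetric]) auto
  also have "\<dots> = (\<integral>\<^sup>+r. \<integral>\<^sup>+z. \<Psi> (J + r) z \<partial>lborel \<partial>lborel)"
    by (rule lborel_shift) measurable
  also have "\<dots> = (\<integral>\<^sup>+r. ennreal (f r * indicator {0..} r) * (\<integral>\<^sup>+\<phi>. ennreal (uu \<phi>) * H r \<phi> \<partial>lborel) \<partial>lborel)"
  proof (rule nn_integral_cong_AE)
    show "AE r in lborel. (\<integral>\<^sup>+z. \<Psi> (J + r) z \<partial>lborel) = ennreal (f r * indicator {0..} r) * (\<integral>\<^sup>+\<phi>. ennreal (uu \<phi>) * H r \<phi> \<partial>lborel)"
      using AE_lborel_singleton[of 0] AE_lborel_singleton[of K]
    proof eventually_elim
      case (elim r)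
      then show ?case
        unfolding \<Psi>_def H_def using inner_r[OF K ab hm fnn, of r J] by simp
    qed
  qed
  also have "\<dots> = (\<integral>\<^sup>+r. \<integral>\<^sup>+\<phi>. ennreal (uu \<phi>) * (ennreal (f r * indicator {0..} r) * H r \<phi>) \<partial>lborel \<partial>lborel)"
    by (rule nn_integral_cong, subst nn_integral_cmult[symmetric]) (auto simp: mult_ac)
  also have "\<dots> = (\<integral>\<^sup>+\<phi>. \<integral>\<^sup>+r. ennreal (uu \<phi>) * (ennreal (f r * indicator {0..} r) * H r \<phi>) \<partial>lborel \<partial>lborel)"
    by (rule lborel_pair.Fubini') measurable
  also have "\<dots> = (\<integral>\<^sup>+\<phi>. ennreal (uu \<phi>) * (\<integral>\<^sup>+r. ennreal (f r * indicator {0..} r) * H r \<phi> \<partial>lborel) \<partial>lborel)"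
    by (rule nn_integral_cong, rule nn_integral_cmult) measurable
  finally show ?thesis unfolding H_def .
qed

lemma J_meas[measurable]: "J_n n \<in> borel_measurable (PiM {..<n-1} (\<lambda>_. lborel :: real measure))"
  unfolding J_n_def by measurable

lemma K_meas[measurable]: "(\<lambda>(x, \<xi>). K_n n x \<xi>) \<in> borel_measurable (PiM {..<n-1} (\<lambda>_. lborel :: real measure) \<Otimes>\<^sub>M PiM {..<n-1} (\<lambda>_. lborel :: real measure))"
  unfolding K_n_def by measurable

lemma sf_PiM_lborel: "finite I \<Longrightarrow> sigma_finite_measure (PiM I (\<lambda>_. lborel :: real measure))"
  using product_sigma_finite.sigma_finite[of "\<lambda>_. lborel" I]
  by (simp add: product_sigma_finite_def lborel.sigma_finite_measure_axioms)

lemma KAB: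
  fixes x \<xi> :: "nat \<Rightarrow> real"
  shows "(\<Sum>i\<in>I. \<Sum>j\<in>I. x i * x j * cos (\<xi> i - \<xi> j)) = (\<Sum>i\<in>I. x i * cos (\<xi> i))\<^sup>2 + (\<Sum>i\<in>I. x i * sin (\<xi> i))\<^sup>2"
  by (simp only: cos_diff) (simp add: power2_eq_square sum_product sum.distrib[symmetric] algebra_simps)

lemma K_n_eq: fixes x \<xi> :: "nat \<Rightarrow> real" shows "K_n n x \<xi> = sqrt ((\<Sum>i<n-1. x i * cos (\<xi> i))\<^sup>2 + (\<Sum>i<n-1. x i * sin (\<xi> i))\<^sup>2)"
  unfolding K_n_def KAB ..

lemma AE_coord:
  fixes P :: "(nat \<Rightarrow> real) \<Rightarrow> bool"
  assumes I: "finite I" "i \<in> I"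
    and Pm[measurable]: "Measurable.pred (PiM I (\<lambda>_. lborel)) P"
    and AEt: "\<And>y. AE t in lborel. \<not> P (y(i := t))"
  shows "AE x in PiM I (\<lambda>_. lborel). \<not> P x"
proof -
  interpret product_sigma_finite "\<lambda>_. lborel :: real measure"
    by (simp add: product_sigma_finite_def lborel.sigma_finite_measure_axioms)
  have Ieq: "I = insert i (I - {i})" using I by auto
  have "emeasure (PiM I (\<lambda>_. lborel)) {x \<in> space (PiM I (\<lambda>_. lborel)). P x}
      = (\<integral>\<^sup>+x. indicator {x \<in> space (PiM I (\<lambda>_. lborel)). P x} x \<partial>PiM I (\<lambda>_. lborel))"
    by (rule nn_integral_indicator[symmetric]) measurable
  also have "\<dots> = (\<integral>\<^sup>+x. (if P x then 1 else 0) \<partial>PiM I (\<lambda>_. lborel))"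
    by (rule nn_integral_cong) (simp add: indicator_def)
  also have "\<dots> = (\<integral>\<^sup>+y. (\<integral>\<^sup>+t. (if P (y(i := t)) then 1 else 0) \<partial>lborel) \<partial>PiM (I - {i}) (\<lambda>_. lborel))"
    by (subst Ieq, subst product_nn_integral_insert) (use I in \<open>auto simp: insert_absorb intro!: measurable_If\<close>)
  also have "\<dots> = (\<integral>\<^sup>+y. 0 \<partial>PiM (I - {i}) (\<lambda>_. lborel :: real measure))"
  proof (intro nn_integral_cong)
    fix y assume y: "y \<in> space (PiM (I - {i}) (\<lambda>_. lborel :: real measure))"
    have m: "(\<lambda>t. y(i := t)) \<in> lborel \<rightarrow>\<^sub>M PiM I (\<lambda>_. lborel)"
      using measurable_component_update[OF y, of i] I Ieq by auto
    show "(\<integral>\<^sup>+t. (if P (y(i := t)) then 1 else 0) \<partial>lborel) = 0"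
      by (subst nn_integral_0_iff_AE) (use AEt[of y] m in \<open>auto elim!: eventually_mono intro!: measurable_If measurable_compose[OF m Pm]\<close>)
  qed
  finally have "emeasure (PiM I (\<lambda>_. lborel)) {x \<in> space (PiM I (\<lambda>_. lborel)). P x} = 0" by simp
  then show ?thesis
    by (subst AE_iff_measurable[OF _ refl]) auto
qed

lemma sincos_countable: "countable {t::real. cos t = c \<and> sin t = d}"
proof (cases "{t::real. cos t = c \<and> sin t = d} = {}")
  case False
  then obtain t0 where t0: "cos t0 = c" "sin t0 = d" by auto
  have "{t::real. cos t = c \<and> sin t = d} \<subseteq> range (\<lambda>k::int. t0 + 2 * pi * real_of_int k)"
  proof
    fix t assume "t \<in> {t::real. cos t = c \<and> sin t = d}"
    then have "sin t = sin t0 \<and> cos t = cos t0" using t0 by auto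
    then obtain k :: int where "t = t0 + 2 * pi * real_of_int k" using sin_cos_eq_iff by blast
    then show "t \<in> range (\<lambda>k::int. t0 + 2 * pi * real_of_int k)" by auto
  qed
  then show ?thesis by (rule countable_subset) simp
next
  case True then show ?thesis by (metis countable_empty)
qed

lemma K_nonzero_AE:
  assumes n: "n \<ge> 2"
  shows "AE x in PiM {..<n-1} (\<lambda>_. lborel :: real measure). AE \<xi> in PiM {..<n-1} (\<lambda>_. lborel :: real measure). K_n n x \<xi> \<noteq> 0"
proof -
  have I0: "0 \<in> {..<n-1}" using n by simp
  have AEx: "AE x in PiM {..<n-1} (\<lambda>_. lborel :: real measure). \<not> x 0 = 0"
  proof (rule AE_coord[OF _ I0])
    show "Measurable.pred (PiM {..<n-1} (\<lambda>_. lborel)) (\<lambda>x::nat\<Rightarrow>real. x 0 = 0)"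
      using I0 by measurable
    show "AE t in lborel. \<not> (y(0 := t)) 0 = 0" for y :: "nat \<Rightarrow> real"
      using AE_lborel_singleton[of 0] by simp
  qed simp
  have AExi: "AE \<xi> in PiM {..<n-1} (\<lambda>_. lborel :: real measure). \<not> K_n n x \<xi> = 0" if x0: "x 0 \<noteq> 0" for x :: "nat \<Rightarrow> real"
  proof (rule AE_coord[OF _ I0])
    show "Measurable.pred (PiM {..<n-1} (\<lambda>_. lborel)) (\<lambda>\<xi>::nat\<Rightarrow>real. K_n n x \<xi> = 0)"
      unfolding K_n_def by measurable
    fix y :: "nat \<Rightarrow> real"
    define A0 where "A0 = (\<Sum>i\<in>{..<n-1}-{0}. x i * cos (y i))"
    define B0 where "B0 = (\<Sum>i\<in>{..<n-1}-{0}. x i * sin (y i))"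
    have "{t. K_n n x (y(0 := t)) = 0} \<subseteq> {t. cos t = - A0 / x 0 \<and> sin t = - B0 / x 0}"
    proof safe
      fix t assume K0: "K_n n x (y(0 := t)) = 0"
      have sa: "(\<Sum>i<n-1. x i * cos ((y(0 := t)) i)) = x 0 * cos t + A0"
        unfolding A0_def by (subst sum.remove[OF _ I0]) (auto intro!: sum.cong)
      have sb: "(\<Sum>i<n-1. x i * sin ((y(0 := t)) i)) = x 0 * sin t + B0"
        unfolding B0_def by (subst sum.remove[OF _ I0]) (auto intro!: sum.cong)
      have "(x 0 * cos t + A0)\<^sup>2 + (x 0 * sin t + B0)\<^sup>2 = 0"
        using K0 unfolding K_n_eq sa sb by simp
      then have "x 0 * cos t + A0 = 0" "x 0 * sin t + B0 = 0"
        by (simp_all add: sum_power2_eq_zero_iff)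
      then show "cos t = - A0 / x 0" "sin t = - B0 / x 0"
        using x0 by (simp_all add: field_simps)
    qed
    moreover have "AE t in lborel. t \<notin> {t. cos t = - A0 / x 0 \<and> sin t = - B0 / x 0}"
      by (rule AE_not_in[OF countable_imp_null_set_lborel[OF sincos_countable]])
    ultimately show "AE t in lborel. \<not> K_n n x (y(0 := t)) = 0"
      by (auto elim!: eventually_mono)
  qed simp
  from AEx show ?thesis
    by eventually_elim (use AExi in auto)
qed

definition Gfun :: "nat \<Rightarrow> (real \<Rightarrow> real) \<Rightarrow> real \<times> real \<Rightarrow> (nat \<Rightarrow> real) \<Rightarrow> (nat \<Rightarrow> real) \<Rightarrow> ennreal" where
  "Gfun n f p x \<xi> = indicator {(x, \<xi>). region n (fst p) (snd p) x \<xi>} (x, \<xi>) *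
        ennreal (f (fst p - J_n n x) * (\<Prod>i<n-1. f (x i)) /
          sqrt (((snd p)\<^sup>2 - (fst p - J_n n x - K_n n x \<xi>)\<^sup>2) * ((fst p - J_n n x + K_n n x \<xi>)\<^sup>2 - (snd p)\<^sup>2)))"

lemma jd_eq: "joint_density f n p = ennreal (4 * snd p / (2*pi)^n) *
   (\<integral>\<^sup>+x. \<integral>\<^sup>+\<xi>. Gfun n f p x \<xi> \<partial>PiM {..<n-1} (\<lambda>_. lborel) \<partial>PiM {..<n-1} (\<lambda>_. lborel))"
  by (cases p) (simp add: joint_density_def Gfun_def)

lemma prod_indicator_ennreal:
  "finite I \<Longrightarrow> (\<Prod>i\<in>I. indicator (A i) (x i) :: ennreal) = (if \<forall>i\<in>I. x i \<in> A i then 1 else 0)"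
  by (auto simp: indicator_def intro: prod_zero)

lemma indpos_meas[measurable]: "(\<lambda>x::nat\<Rightarrow>real. \<Prod>i<n-1. indicator {0..} (x i) :: ennreal) \<in> borel_measurable (PiM {..<n-1} (\<lambda>_. lborel))"
  apply (rule borel_measurable_prod_ennreal)
  apply (rule measurable_compose[OF measurable_component_singleton])
   apply simp
  apply (rule borel_measurable_indicator)
  apply (simp only: sets_lborel atLeast_borel)
  done

lemma indang_meas[measurable]: "(\<lambda>x::nat\<Rightarrow>real. \<Prod>i<n-1. indicator {0..<2*pi} (x i) :: ennreal) \<in> borel_measurable (PiM {..<n-1} (\<lambda>_. lborel))"
  apply (rule borel_measurable_prod_ennreal)
  apply (rule measurable_compose[OF measurable_component_singleton])
   apply simp
  apply (rule borel_measurable_indicator)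
  apply (simp only: sets_lborel atLeastLessThan_borel)
  done

lemma Gfun_alt: "Gfun n f p x \<xi> = (\<Prod>i<n-1. indicator {0..} (x i)) * (\<Prod>i<n-1. indicator {0..<2*pi} (\<xi> i)) *
   indicator {p. \<bar>fst p - J_n n x - K_n n x \<xi>\<bar> \<le> snd p \<and> snd p \<le> fst p - J_n n x + K_n n x \<xi>} p *
   ennreal (f (fst p - J_n n x) * (\<Prod>i<n-1. f (x i)) /
          sqrt (((snd p)\<^sup>2 - (fst p - J_n n x - K_n n x \<xi>)\<^sup>2) * ((fst p - J_n n x + K_n n x \<xi>)\<^sup>2 - (snd p)\<^sup>2)))"
  unfolding Gfun_def prod_indicator_ennreal[OF finite_lessThan]
  by (auto simp: region_def indicator_def)

lemma Gfun_meas[measurable]: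
  assumes [measurable]: "f \<in> borel_measurable borel"
  shows "(\<lambda>w. Gfun n f (fst (fst w)) (snd (fst w)) (snd w)) \<in> borel_measurable (((lborel \<Otimes>\<^sub>M lborel) \<Otimes>\<^sub>M PiM {..<n-1} (\<lambda>_. lborel)) \<Otimes>\<^sub>M PiM {..<n-1} (\<lambda>_. lborel))"
  unfolding Gfun_alt by measurable

lemma ennreal_arith:
  fixes z F P Q :: real and H :: ennreal
  assumes "0 \<le> z" "0 \<le> F" "0 \<le> P" "0 \<le> Q" "n \<ge> 1"
  shows "ennreal (4 * z / (2*pi)^n) * H * ennreal (F * P / Q)
       = ennreal P * ennreal ((1/(2*pi))^(n-1)) * (H * ennreal (2 * z * F / (pi * Q)))"
proof -
  obtain k where k: "n = Suc k" using assms(5) by (cases n) auto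
  have "4 * z / (2*pi)^n * (F * P / Q) = P * (1/(2*pi))^(n-1) * (2 * z * F / (pi * Q))"
    unfolding k by (simp add: field_simps power_one_over)
  then have "ennreal (4 * z / (2*pi)^n * (F * P / Q)) = ennreal (P * (1/(2*pi))^(n-1) * (2 * z * F / (pi * Q)))"
    by simp
  then show ?thesis using assms
    by (simp add: ennreal_mult[symmetric] mult_ac divide_nonneg_nonneg mult_nonneg_nonneg)
qed

lemma K_n_nonneg: "K_n n x \<xi> \<ge> 0"
  unfolding K_n_eq by simp

lemma perxi:
  fixes f :: "real \<Rightarrow> real" and h :: "real \<times> real \<Rightarrow> ennreal" and x \<xi> :: "nat \<Rightarrow> real"
  assumes n: "n \<ge> 2" and fnn: "\<And>x. 0 \<le> f x" and fm[measurable]: "f \<in> borel_measurable borel"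
    and hm[measurable]: "h \<in> borel_measurable (lborel \<Otimes>\<^sub>M lborel)"
    and K0: "K_n n x \<xi> \<noteq> 0"
  shows "(\<integral>\<^sup>+p. ennreal (4 * snd p / (2*pi)^n) * h p * Gfun n f p x \<xi> \<partial>(lborel \<Otimes>\<^sub>M lborel))
    = ennreal (\<Prod>i<n-1. f (x i) * indicator {0..} (x i)) * ennreal (\<Prod>i<n-1. uu (\<xi> i)) *
      (\<integral>\<^sup>+\<phi>. ennreal (uu \<phi>) * (\<integral>\<^sup>+r. ennreal (f r * indicator {0..} r) *
         h (J_n n x + r, sqrt (((\<Sum>i<n-1. x i * cos (\<xi> i)) + r * cos \<phi>)\<^sup>2 + ((\<Sum>i<n-1. x i * sin (\<xi> i)) + r * sin \<phi>)\<^sup>2)) \<partial>lborel) \<partial>lborel)"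
proof (cases "\<forall>i<n-1. 0 \<le> x i \<and> 0 \<le> \<xi> i \<and> \<xi> i < 2*pi")
  case False
  then obtain i where i: "i < n-1" "\<not> (0 \<le> x i \<and> 0 \<le> \<xi> i \<and> \<xi> i < 2*pi)" by auto
  have G0: "Gfun n f p x \<xi> = 0" for p
    using False by (simp add: Gfun_def region_def)
  have "(\<Prod>i<n-1. f (x i) * indicator {0..} (x i)) * (\<Prod>i<n-1. uu (\<xi> i)) = 0"
  proof (cases "0 \<le> x i")
    case True
    then have "uu (\<xi> i) = 0" using i by (auto simp: uu_def)
    then show ?thesis using i by (auto intro!: prod_zero)
  next
    case False
    then have "f (x i) * indicator {0..} (x i) = 0" by simp
    then show ?thesis using i by (auto intro!: prod_zero)
  qed
  then have "ennreal (\<Prod>i<n-1. f (x i) * indicator {0..} (x i)) * ennreal (\<Prod>i<n-1. uu (\<xi> i)) = 0"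
    by (simp add: ennreal_mult[symmetric] prod_nonneg fnn uu_nonneg)
  then show ?thesis by (simp add: G0)
next
  case True
  define J where "J = J_n n x"
  define K where "K = K_n n x \<xi>"
  define a where "a = (\<Sum>i<n-1. x i * cos (\<xi> i))"
  define b where "b = (\<Sum>i<n-1. x i * sin (\<xi> i))"
  have Kpos: "K > 0" using K0 K_n_nonneg[of n x \<xi>] unfolding K_def by linarith
  have ab: "a\<^sup>2 + b\<^sup>2 = K\<^sup>2" unfolding K_def K_n_eq a_def b_def by simp
  define P where "P = (\<Prod>i<n-1. f (x i))"
  have Pnn: "P \<ge> 0" unfolding P_def by (simp add: prod_nonneg fnn)
  have P1: "(\<Prod>i<n-1. f (x i) * indicator {0..} (x i)) = P"
    unfolding P_def using True by (auto intro!: prod.cong)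
  have U1: "(\<Prod>i<n-1. uu (\<xi> i)) = (1/(2*pi))^(n-1)"
    using True by (simp add: uu_def)
  define I where "I p = (h p * indicator {p. \<bar>fst p - J - K\<bar> \<le> snd p \<and> snd p \<le> fst p - J + K} p *
            ennreal (2 * snd p * f (fst p - J) / (pi * sqrt (((snd p)\<^sup>2 - (fst p - J - K)\<^sup>2) * ((fst p - J + K)\<^sup>2 - (snd p)\<^sup>2)))))" for p
  have pw: "ennreal (4 * snd p / (2*pi)^n) * h p * Gfun n f p x \<xi> = ennreal P * ennreal ((1/(2*pi))^(n-1)) * I p" for p
  proof (cases "\<bar>fst p - J - K\<bar> \<le> snd p \<and> snd p \<le> fst p - J + K")
    case reg: True
    have z: "snd p \<ge> 0" using reg by linarith
    have "(fst p - J - K)\<^sup>2 \<le> (snd p)\<^sup>2"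
      using power_mono[of "\<bar>fst p - J - K\<bar>" "snd p" 2] reg by simp
    moreover have "(snd p)\<^sup>2 \<le> (fst p - J + K)\<^sup>2"
      using power_mono[of "snd p" "fst p - J + K" 2] reg z by simp
    ultimately have Dnn: "0 \<le> sqrt (((snd p)\<^sup>2 - (fst p - J - K)\<^sup>2) * ((fst p - J + K)\<^sup>2 - (snd p)\<^sup>2))"
      by simp
    have G: "Gfun n f p x \<xi> = ennreal (f (fst p - J) * P / sqrt (((snd p)\<^sup>2 - (fst p - J - K)\<^sup>2) * ((fst p - J + K)\<^sup>2 - (snd p)\<^sup>2)))"
      using True reg unfolding Gfun_def region_def J_def K_def P_def by simp
    show ?thesis unfolding G I_def using reg
      by (subst ennreal_arith[OF z fnn Pnn Dnn]) (use n in auto)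
  next
    case False
    then show ?thesis by (simp add: Gfun_def region_def I_def J_def K_def)
  qed
  have Im[measurable]: "I \<in> borel_measurable (lborel \<Otimes>\<^sub>M lborel)" unfolding I_def by measurable
  have "(\<integral>\<^sup>+p. ennreal (4 * snd p / (2*pi)^n) * h p * Gfun n f p x \<xi> \<partial>(lborel \<Otimes>\<^sub>M lborel))
      = ennreal P * ennreal ((1/(2*pi))^(n-1)) * (\<integral>\<^sup>+p. I p \<partial>(lborel \<Otimes>\<^sub>M lborel))"
    unfolding pw by (rule nn_integral_cmult) measurable
  also have "(\<integral>\<^sup>+p. I p \<partial>(lborel \<Otimes>\<^sub>M lborel)) = (\<integral>\<^sup>+\<phi>. ennreal (uu \<phi>) * (\<integral>\<^sup>+r. ennreal (f r * indicator {0..} r) *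
            h (J + r, sqrt ((a + r * cos \<phi>)\<^sup>2 + (b + r * sin \<phi>)\<^sup>2)) \<partial>lborel) \<partial>lborel)"
    unfolding I_def by (rule inner[OF Kpos ab hm fnn fm])
  finally show ?thesis unfolding P1 U1 J_def a_def b_def .
qed

lemma main_analytic:
  fixes f :: "real \<Rightarrow> real" and h :: "real \<times> real \<Rightarrow> ennreal"
  assumes n: "n \<ge> 2" and fnn: "\<And>x. 0 \<le> f x" and fm[measurable]: "f \<in> borel_measurable borel"
    and hm[measurable]: "h \<in> borel_measurable (lborel \<Otimes>\<^sub>M lborel)"
  shows "(\<integral>\<^sup>+p. joint_density f n p * h p \<partial>(lborel \<Otimes>\<^sub>M lborel))
    = (\<integral>\<^sup>+x. \<integral>\<^sup>+\<xi>. ennreal (\<Prod>i<n-1. f (x i) * indicator {0..} (x i)) * ennreal (\<Prod>i<n-1. uu (\<xi> i)) *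
      (\<integral>\<^sup>+\<phi>. ennreal (uu \<phi>) * (\<integral>\<^sup>+r. ennreal (f r * indicator {0..} r) *
         h (J_n n x + r, sqrt (((\<Sum>i<n-1. x i * cos (\<xi> i)) + r * cos \<phi>)\<^sup>2 + ((\<Sum>i<n-1. x i * sin (\<xi> i)) + r * sin \<phi>)\<^sup>2)) \<partial>lborel) \<partial>lborel)
      \<partial>PiM {..<n-1} (\<lambda>_. lborel) \<partial>PiM {..<n-1} (\<lambda>_. lborel))"
proof -
  interpret PX: sigma_finite_measure "PiM {..<n-1} (\<lambda>_. lborel :: real measure)"
    by (rule sf_PiM_lborel) simp
  have sfL2: "sigma_finite_measure (lborel \<Otimes>\<^sub>M lborel :: (real \<times> real) measure)"
    by (rule lborel_pair.P.sigma_finite_measure_axioms)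
  interpret P2: pair_sigma_finite "lborel \<Otimes>\<^sub>M lborel :: (real \<times> real) measure" "PiM {..<n-1} (\<lambda>_. lborel :: real measure)"
    by (intro pair_sigma_finite.intro sfL2 PX.sigma_finite_measure_axioms)
  define \<Phi> where "\<Phi> p x \<xi> = ennreal (4 * snd p / (2*pi)^n) * h p * Gfun n f p x \<xi>" for p x \<xi>
  have Gm1: "(\<lambda>(x, \<xi>). Gfun n f p x \<xi>) \<in> borel_measurable (PiM {..<n-1} (\<lambda>_. lborel) \<Otimes>\<^sub>M PiM {..<n-1} (\<lambda>_. lborel))" for p
    unfolding Gfun_alt by measurable
  have Gm2: "(\<lambda>x. \<integral>\<^sup>+\<xi>. Gfun n f p x \<xi> \<partial>PiM {..<n-1} (\<lambda>_. lborel)) \<in> borel_measurable (PiM {..<n-1} (\<lambda>_. lborel))" for p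
    by (rule PX.borel_measurable_nn_integral) (rule Gm1)
  have Gm3: "(\<lambda>\<xi>. Gfun n f p x \<xi>) \<in> borel_measurable (PiM {..<n-1} (\<lambda>_. lborel))"
    if "x \<in> space (PiM {..<n-1} (\<lambda>_. lborel :: real measure))" for p x
    using measurable_Pair2[OF Gm1 that] by simp
  have \<Phi>m: "case_prod (\<lambda>px \<xi>. \<Phi> (fst px) (snd px) \<xi>) \<in> borel_measurable (((lborel \<Otimes>\<^sub>M lborel) \<Otimes>\<^sub>M PiM {..<n-1} (\<lambda>_. lborel)) \<Otimes>\<^sub>M PiM {..<n-1} (\<lambda>_. lborel))"
    unfolding \<Phi>_def split_beta' Gfun_alt by measurable
  have \<Phi>m2: "case_prod (\<lambda>p x. \<integral>\<^sup>+\<xi>. \<Phi> p x \<xi> \<partial>PiM {..<n-1} (\<lambda>_. lborel)) \<in> borel_measurable ((lborel \<Otimes>\<^sub>M lborel) \<Otimes>\<^sub>M PiM {..<n-1} (\<lambda>_. lborel))"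
    using PX.borel_measurable_nn_integral[OF \<Phi>m] by (simp add: split_beta')
  have \<Phi>m3: "case_prod (\<lambda>p \<xi>. \<Phi> p x \<xi>) \<in> borel_measurable ((lborel \<Otimes>\<^sub>M lborel) \<Otimes>\<^sub>M PiM {..<n-1} (\<lambda>_. lborel))"
    if x: "x \<in> space (PiM {..<n-1} (\<lambda>_. lborel :: real measure))" for x
  proof -
    have "(\<lambda>w. ((fst w, x), snd w)) \<in> (lborel \<Otimes>\<^sub>M lborel) \<Otimes>\<^sub>M PiM {..<n-1} (\<lambda>_. lborel) \<rightarrow>\<^sub>M
       ((lborel \<Otimes>\<^sub>M lborel) \<Otimes>\<^sub>M PiM {..<n-1} (\<lambda>_. lborel)) \<Otimes>\<^sub>M PiM {..<n-1} (\<lambda>_. lborel :: real measure)"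
      using x by measurable
    from measurable_compose[OF this \<Phi>m] show ?thesis by (simp add: split_beta')
  qed
  have "(\<integral>\<^sup>+p. joint_density f n p * h p \<partial>(lborel \<Otimes>\<^sub>M lborel))
      = (\<integral>\<^sup>+p. \<integral>\<^sup>+x. \<integral>\<^sup>+\<xi>. \<Phi> p x \<xi> \<partial>PiM {..<n-1} (\<lambda>_. lborel) \<partial>PiM {..<n-1} (\<lambda>_. lborel) \<partial>(lborel \<Otimes>\<^sub>M lborel))"
  proof (rule nn_integral_cong)
    fix p :: "real \<times> real"
    have "joint_density f n p * h p = (ennreal (4 * snd p / (2*pi)^n) * h p) *
       (\<integral>\<^sup>+x. \<integral>\<^sup>+\<xi>. Gfun n f p x \<xi> \<partial>PiM {..<n-1} (\<lambda>_. lborel) \<partial>PiM {..<n-1} (\<lambda>_. lborel))"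
      unfolding jd_eq by (simp add: mult_ac)
    also have "\<dots> = (\<integral>\<^sup>+x. (ennreal (4 * snd p / (2*pi)^n) * h p) * \<integral>\<^sup>+\<xi>. Gfun n f p x \<xi> \<partial>PiM {..<n-1} (\<lambda>_. lborel) \<partial>PiM {..<n-1} (\<lambda>_. lborel))"
      by (rule nn_integral_cmult[symmetric]) (rule Gm2)
    also have "\<dots> = (\<integral>\<^sup>+x. \<integral>\<^sup>+\<xi>. \<Phi> p x \<xi> \<partial>PiM {..<n-1} (\<lambda>_. lborel) \<partial>PiM {..<n-1} (\<lambda>_. lborel))"
      unfolding \<Phi>_def
      apply (rule nn_integral_cong)
      apply (rule nn_integral_cmult[symmetric])
      apply (erule Gm3)
      done
    finally show "joint_density f n p * h p = (\<integral>\<^sup>+x. \<integral>\<^sup>+\<xi>. \<Phi> p x \<xi> \<partial>PiM {..<n-1} (\<lambda>_. lborel) \<partial>PiM {..<n-1} (\<lambda>_. lborel))" .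
  qed
  also have "\<dots> = (\<integral>\<^sup>+x. \<integral>\<^sup>+p. \<integral>\<^sup>+\<xi>. \<Phi> p x \<xi> \<partial>PiM {..<n-1} (\<lambda>_. lborel) \<partial>(lborel \<Otimes>\<^sub>M lborel) \<partial>PiM {..<n-1} (\<lambda>_. lborel))"
    by (rule P2.Fubini'[symmetric]) (rule \<Phi>m2)
  also have "\<dots> = (\<integral>\<^sup>+x. \<integral>\<^sup>+\<xi>. \<integral>\<^sup>+p. \<Phi> p x \<xi> \<partial>(lborel \<Otimes>\<^sub>M lborel) \<partial>PiM {..<n-1} (\<lambda>_. lborel) \<partial>PiM {..<n-1} (\<lambda>_. lborel))"
    apply (rule nn_integral_cong)
    apply (rule P2.Fubini'[symmetric])
    apply (erule \<Phi>m3)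
    done
  also have "\<dots> = (\<integral>\<^sup>+x. \<integral>\<^sup>+\<xi>. ennreal (\<Prod>i<n-1. f (x i) * indicator {0..} (x i)) * ennreal (\<Prod>i<n-1. uu (\<xi> i)) *
      (\<integral>\<^sup>+\<phi>. ennreal (uu \<phi>) * (\<integral>\<^sup>+r. ennreal (f r * indicator {0..} r) *
         h (J_n n x + r, sqrt (((\<Sum>i<n-1. x i * cos (\<xi> i)) + r * cos \<phi>)\<^sup>2 + ((\<Sum>i<n-1. x i * sin (\<xi> i)) + r * sin \<phi>)\<^sup>2)) \<partial>lborel) \<partial>lborel)
      \<partial>PiM {..<n-1} (\<lambda>_. lborel) \<partial>PiM {..<n-1} (\<lambda>_. lborel))"
  proof (rule nn_integral_cong_AE)
    show "AE x in PiM {..<n-1} (\<lambda>_. lborel). (\<integral>\<^sup>+\<xi>. \<integral>\<^sup>+p. \<Phi> p x \<xi> \<partial>(lborel \<Otimes>\<^sub>M lborel) \<partial>PiM {..<n-1} (\<lambda>_. lborel)) =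
      (\<integral>\<^sup>+\<xi>. ennreal (\<Prod>i<n-1. f (x i) * indicator {0..} (x i)) * ennreal (\<Prod>i<n-1. uu (\<xi> i)) *
      (\<integral>\<^sup>+\<phi>. ennreal (uu \<phi>) * (\<integral>\<^sup>+r. ennreal (f r * indicator {0..} r) *
         h (J_n n x + r, sqrt (((\<Sum>i<n-1. x i * cos (\<xi> i)) + r * cos \<phi>)\<^sup>2 + ((\<Sum>i<n-1. x i * sin (\<xi> i)) + r * sin \<phi>)\<^sup>2)) \<partial>lborel) \<partial>lborel)
      \<partial>PiM {..<n-1} (\<lambda>_. lborel))"
      using K_nonzero_AE[OF n]
    proof eventually_elim
      case (elim x)
      show ?case
        by (rule nn_integral_cong_AE, rule eventually_mono[OF elim]) (unfold \<Phi>_def, rule perxi[OF n fnn fm hm])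
    qed
  qed
  finally show ?thesis .
qed

definition Psi :: "nat \<Rightarrow> (nat \<Rightarrow> real) \<times> (nat \<Rightarrow> real) \<times> real \<times> real \<Rightarrow> nat + nat \<Rightarrow> real" where
  "Psi m w = (\<lambda>i\<in>Inl ` {..<Suc m} \<union> Inr ` {..<Suc m}. case i of
      Inl j \<Rightarrow> (if j < m then fst w j else snd (snd (snd w)))
    | Inr j \<Rightarrow> (if j < m then fst (snd w) j else fst (snd (snd w))))"

lemma Psi_meas:
  fixes N1 N2 :: "real measure"
  assumes s1: "sets N1 = sets borel" and s2: "sets N2 = sets borel"
  shows "Psi m \<in> (PiM {..<m} (\<lambda>_. N1) \<Otimes>\<^sub>M (PiM {..<m} (\<lambda>_. N2) \<Otimes>\<^sub>M (N2 \<Otimes>\<^sub>M N1))) \<rightarrow>\<^sub>M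
       PiM (Inl ` {..<Suc m} \<union> Inr ` {..<Suc m}) (\<lambda>_. borel)"
    (is "Psi m \<in> ?Q \<rightarrow>\<^sub>M ?B")
proof -
  let ?T = "Inl ` {..<Suc m} \<union> Inr ` {..<Suc m}"
  have mN1: "measurable M N1 = measurable M borel" for M :: "'x measure" by (rule measurable_cong_sets[OF refl s1])
  have mN2: "measurable M N2 = measurable M borel" for M :: "'x measure" by (rule measurable_cong_sets[OF refl s2])
  show "Psi m \<in> ?Q \<rightarrow>\<^sub>M ?B"
    unfolding Psi_def
  proof (rule measurable_restrict)
    fix i assume i: "i \<in> ?T"
    show "(\<lambda>w. case i of Inl j \<Rightarrow> (if j < m then fst w j else snd (snd (snd w)))
              | Inr j \<Rightarrow> (if j < m then fst (snd w) j else fst (snd (snd w)))) \<in> ?Q \<rightarrow>\<^sub>M borel"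
    proof (cases i)
      case (Inl j)
      show ?thesis
      proof (cases "j < m")
        case True
        have "(\<lambda>w. fst w j) \<in> ?Q \<rightarrow>\<^sub>M N1"
          by (rule measurable_compose[OF measurable_fst measurable_component_singleton]) (use True in simp)
        then show ?thesis using Inl True by (simp add: mN1)
      next
        case False
        have "(\<lambda>w. snd (snd (snd w))) \<in> ?Q \<rightarrow>\<^sub>M N1" by measurable
        then show ?thesis using Inl False by (simp add: mN1)
      qed
    next
      case (Inr j)
      show ?thesis
      proof (cases "j < m")
        case True
        have "(\<lambda>w. fst (snd w) j) \<in> ?Q \<rightarrow>\<^sub>M N2"
          by (rule measurable_compose[OF measurable_compose[OF measurable_snd measurable_fst] measurable_component_singleton]) (use True in simp)
        then show ?thesis using Inr True by (simp add: mN2)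
      next
        case False
        have "(\<lambda>w. fst (snd (snd w))) \<in> ?Q \<rightarrow>\<^sub>M N2" by measurable
        then show ?thesis using Inr False by (simp add: mN2)
      qed
    qed
  qed
qed

lemma DIST:
  fixes N1 N2 :: "real measure"
  assumes sf1: "sigma_finite_measure N1" and sf2: "sigma_finite_measure N2"
    and s1: "sets N1 = sets borel" and s2: "sets N2 = sets borel"
  shows "distr (PiM {..<m} (\<lambda>_. N1) \<Otimes>\<^sub>M (PiM {..<m} (\<lambda>_. N2) \<Otimes>\<^sub>M (N2 \<Otimes>\<^sub>M N1)))
       (PiM (Inl ` {..<Suc m} \<union> Inr ` {..<Suc m}) (\<lambda>_. borel)) (Psi m)
     = PiM (Inl ` {..<Suc m} \<union> Inr ` {..<Suc m}) (\<lambda>i. case i of Inl _ \<Rightarrow> N1 | Inr _ \<Rightarrow> N2)"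
    (is "distr ?Q ?B (Psi m) = PiM ?T ?N")
proof -
  interpret N1: sigma_finite_measure N1 by (rule sf1)
  interpret N2: sigma_finite_measure N2 by (rule sf2)
  have sN: "sets (?N i) = sets borel" for i by (cases i) (simp_all add: s1 s2)
  interpret NN: product_sigma_finite ?N
    unfolding product_sigma_finite_def by (auto split: sum.split simp: sf1 sf2)
  interpret P1: product_sigma_finite "\<lambda>_::nat. N1" unfolding product_sigma_finite_def using sf1 by simp
  interpret P2: product_sigma_finite "\<lambda>_::nat. N2" unfolding product_sigma_finite_def using sf2 by simp
  interpret PX1: sigma_finite_measure "PiM {..<m} (\<lambda>_. N1)" by (rule P1.sigma_finite) simp
  interpret PX2: sigma_finite_measure "PiM {..<m} (\<lambda>_. N2)" by (rule P2.sigma_finite) simp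
  interpret N21: sigma_finite_measure "N2 \<Otimes>\<^sub>M N1" by (rule sigma_finite_pair_measure[OF sf2 sf1])
  interpret Q2: sigma_finite_measure "PiM {..<m} (\<lambda>_. N2) \<Otimes>\<^sub>M (N2 \<Otimes>\<^sub>M N1)"
    by (rule sigma_finite_pair_measure[OF PX2.sigma_finite_measure_axioms N21.sigma_finite_measure_axioms])
  have sp1: "space N1 = UNIV" using sets_eq_imp_space_eq[OF s1] by simp
  have sp2: "space N2 = UNIV" using sets_eq_imp_space_eq[OF s2] by simp
  have mN1: "measurable M N1 = measurable M borel" for M :: "'x measure" by (rule measurable_cong_sets[OF refl s1])
  have mN2: "measurable M N2 = measurable M borel" for M :: "'x measure" by (rule measurable_cong_sets[OF refl s2])
  have Psi_m: "Psi m \<in> ?Q \<rightarrow>\<^sub>M ?B"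
    unfolding Psi_def
  proof (rule measurable_restrict)
    fix i assume i: "i \<in> ?T"
    show "(\<lambda>w. case i of Inl j \<Rightarrow> (if j < m then fst w j else snd (snd (snd w)))
              | Inr j \<Rightarrow> (if j < m then fst (snd w) j else fst (snd (snd w)))) \<in> ?Q \<rightarrow>\<^sub>M borel"
    proof (cases i)
      case (Inl j)
      show ?thesis
      proof (cases "j < m")
        case True
        have "(\<lambda>w. fst w j) \<in> ?Q \<rightarrow>\<^sub>M N1"
          by (rule measurable_compose[OF measurable_fst measurable_component_singleton]) (use True in simp)
        then show ?thesis using Inl True by (simp add: mN1)
      next
        case False
        have "(\<lambda>w. snd (snd (snd w))) \<in> ?Q \<rightarrow>\<^sub>M N1" by measurable
        then show ?thesis using Inl False by (simp add: mN1)
      qed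
    next
      case (Inr j)
      show ?thesis
      proof (cases "j < m")
        case True
        have "(\<lambda>w. fst (snd w) j) \<in> ?Q \<rightarrow>\<^sub>M N2"
          by (rule measurable_compose[OF measurable_compose[OF measurable_snd measurable_fst] measurable_component_singleton]) (use True in simp)
        then show ?thesis using Inr True by (simp add: mN2)
      next
        case False
        have "(\<lambda>w. fst (snd (snd w))) \<in> ?Q \<rightarrow>\<^sub>M N2" by measurable
        then show ?thesis using Inr False by (simp add: mN2)
      qed
    qed
  qed
  show ?thesis
  proof (rule NN.PiM_eqI)
    show "finite ?T" by simp
    show "sets (distr ?Q ?B (Psi m)) = sets (PiM ?T ?N)"
      by (simp add: sN cong: sets_PiM_cong)
    fix A assume A: "\<And>i. i \<in> ?T \<Longrightarrow> A i \<in> sets (?N i)"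
    have Ab: "A i \<in> sets borel" if "i \<in> ?T" for i using A[OF that] sN by simp
    have AL: "A (Inl j) \<in> sets N1" if "j < Suc m" for j using A[of "Inl j"] that by simp
    have AR: "A (Inr j) \<in> sets N2" if "j < Suc m" for j using A[of "Inr j"] that by simp
    have pre: "Psi m -` PiE ?T A \<inter> space ?Q =
       PiE {..<m} (\<lambda>j. A (Inl j)) \<times> (PiE {..<m} (\<lambda>j. A (Inr j)) \<times> (A (Inr m) \<times> A (Inl m)))"
      (is "?L = ?R")
    proof (intro equalityI subsetI)
      fix w assume w: "w \<in> ?L"
      obtain x \<xi> \<phi> r where wd: "w = (x, \<xi>, \<phi>, r)" by (cases w) auto
      from w have xs: "x \<in> extensional {..<m}" "\<xi> \<in> extensional {..<m}"
        by (auto simp: wd space_pair_measure space_PiM PiE_iff)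
      from w have "\<forall>i\<in>?T. Psi m w i \<in> A i" by (auto simp: PiE_iff)
      then have L: "\<And>j. j < Suc m \<Longrightarrow> Psi m w (Inl j) \<in> A (Inl j)" and R: "\<And>j. j < Suc m \<Longrightarrow> Psi m w (Inr j) \<in> A (Inr j)" by auto
      have "x j \<in> A (Inl j)" if "j < m" for j using L[of j] that by (simp add: wd Psi_def)
      moreover have "\<xi> j \<in> A (Inr j)" if "j < m" for j using R[of j] that by (simp add: wd Psi_def)
      moreover have "r \<in> A (Inl m)" using L[of m] by (simp add: wd Psi_def)
      moreover have "\<phi> \<in> A (Inr m)" using R[of m] by (simp add: wd Psi_def)
      ultimately show "w \<in> ?R" using xs by (auto simp: wd PiE_iff)
    next
      fix w assume w: "w \<in> ?R"
      obtain x \<xi> \<phi> r where wd: "w = (x, \<xi>, \<phi>, r)" by (cases w) auto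
      have sp: "w \<in> space ?Q"
        using w by (auto simp: wd space_pair_measure space_PiM sp1 sp2 PiE_iff)
      have "Psi m w \<in> PiE ?T A"
        using w by (auto simp: wd Psi_def PiE_iff less_Suc_eq)
      then show "w \<in> ?L" using sp by simp
    qed
    have "emeasure (distr ?Q ?B (Psi m)) (PiE ?T A) = emeasure ?Q (Psi m -` PiE ?T A \<inter> space ?Q)"
      by (rule emeasure_distr[OF Psi_m]) (auto intro!: sets_PiM_I_finite Ab)
    also have "\<dots> = emeasure (PiM {..<m} (\<lambda>_. N1)) (PiE {..<m} (\<lambda>j. A (Inl j))) *
        (emeasure (PiM {..<m} (\<lambda>_. N2)) (PiE {..<m} (\<lambda>j. A (Inr j))) * (emeasure N2 (A (Inr m)) * emeasure N1 (A (Inl m))))"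
    proof -
      have S1: "PiE {..<m} (\<lambda>j. A (Inl j)) \<in> sets (PiM {..<m} (\<lambda>_. N1))" by (rule sets_PiM_I_finite) (auto intro: AL)
      have S2: "PiE {..<m} (\<lambda>j. A (Inr j)) \<in> sets (PiM {..<m} (\<lambda>_. N2))" by (rule sets_PiM_I_finite) (auto intro: AR)
      have S3: "A (Inr m) \<in> sets N2" by (rule AR) simp
      have S4: "A (Inl m) \<in> sets N1" by (rule AL) simp
      have S34: "A (Inr m) \<times> A (Inl m) \<in> sets (N2 \<Otimes>\<^sub>M N1)" by (rule pair_measureI[OF S3 S4])
      have S234: "PiE {..<m} (\<lambda>j. A (Inr j)) \<times> (A (Inr m) \<times> A (Inl m)) \<in> sets (PiM {..<m} (\<lambda>_. N2) \<Otimes>\<^sub>M (N2 \<Otimes>\<^sub>M N1))"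
        by (rule pair_measureI[OF S2 S34])
      show ?thesis unfolding pre
        by (simp only: Q2.emeasure_pair_measure_Times[OF S1 S234] N21.emeasure_pair_measure_Times[OF S2 S34] N1.emeasure_pair_measure_Times[OF S3 S4])
    qed
    also have "\<dots> = (\<Prod>j<m. emeasure N1 (A (Inl j))) * ((\<Prod>j<m. emeasure N2 (A (Inr j))) * (emeasure N2 (A (Inr m)) * emeasure N1 (A (Inl m))))"
    proof -
      have E1: "emeasure (PiM {..<m} (\<lambda>_. N1)) (PiE {..<m} (\<lambda>j. A (Inl j))) = (\<Prod>j<m. emeasure N1 (A (Inl j)))"
        by (rule P1.emeasure_PiM) (auto intro: AL)
      have E2: "emeasure (PiM {..<m} (\<lambda>_. N2)) (PiE {..<m} (\<lambda>j. A (Inr j))) = (\<Prod>j<m. emeasure N2 (A (Inr j)))"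
        by (rule P2.emeasure_PiM) (auto intro: AR)
      show ?thesis unfolding E1 E2 ..
    qed
    also have "\<dots> = (\<Prod>j<Suc m. emeasure N1 (A (Inl j))) * (\<Prod>j<Suc m. emeasure N2 (A (Inr j)))"
      by (simp add: mult_ac)
    also have "\<dots> = (\<Prod>i\<in>?T. emeasure (?N i) (A i))"
      by (subst prod.union_disjoint) (auto simp: prod.reindex)
    finally show "emeasure (distr ?Q ?B (Psi m)) (PiE ?T A) = (\<Prod>i\<in>?T. emeasure (?N i) (A i))" .
  qed
qed

lemma DENS:
  fixes g :: "real \<Rightarrow> ennreal" and I :: "'i set"
  assumes I: "finite I" and gm[measurable]: "g \<in> borel_measurable borel"
    and sf: "sigma_finite_measure (density lborel g)"
  shows "PiM I (\<lambda>_. density lborel g) = density (PiM I (\<lambda>_. lborel)) (\<lambda>x. \<Prod>i\<in>I. g (x i))"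
proof -
  interpret PD: product_sigma_finite "\<lambda>_::'i. density lborel g"
    unfolding product_sigma_finite_def using sf by simp
  interpret PL: product_sigma_finite "\<lambda>_::'i. lborel :: real measure"
    unfolding product_sigma_finite_def by (simp add: lborel.sigma_finite_measure_axioms)
  have Gm: "(\<lambda>x. \<Prod>i\<in>I. g (x i)) \<in> borel_measurable (PiM I (\<lambda>_. lborel))"
    apply (rule borel_measurable_prod_ennreal)
    apply (rule measurable_compose[where g=g and N=lborel])
     apply (rule measurable_component_singleton)
     apply simp
    apply simp
    done
  show ?thesis
  proof (rule PD.PiM_eqI[symmetric])
    show "finite I" by fact
    show "sets (density (PiM I (\<lambda>_. lborel)) (\<lambda>x. \<Prod>i\<in>I. g (x i))) = sets (PiM I (\<lambda>_. density lborel g))"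
      by (simp cong: sets_PiM_cong)
    fix A assume A: "\<And>i. i \<in> I \<Longrightarrow> A i \<in> sets (density lborel g)"
    then have A': "\<And>i. i \<in> I \<Longrightarrow> A i \<in> sets lborel" by simp
    have PA: "PiE I A \<in> sets (PiM I (\<lambda>_. lborel))" by (rule sets_PiM_I_finite[OF I A'])
    have "emeasure (density (PiM I (\<lambda>_. lborel)) (\<lambda>x. \<Prod>i\<in>I. g (x i))) (PiE I A)
        = (\<integral>\<^sup>+x. (\<Prod>i\<in>I. g (x i)) * indicator (PiE I A) x \<partial>PiM I (\<lambda>_. lborel))"
      by (rule emeasure_density[OF Gm PA])
    also have "\<dots> = (\<integral>\<^sup>+x. (\<Prod>i\<in>I. g (x i) * indicator (A i) (x i)) \<partial>PiM I (\<lambda>_. lborel))"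
    proof (rule nn_integral_cong)
      fix x assume x: "x \<in> space (PiM I (\<lambda>_. lborel :: real measure))"
      then have "indicator (PiE I A) x = (\<Prod>i\<in>I. indicator (A i) (x i) :: ennreal)"
        using I by (simp add: prod_indicator_ennreal[OF I] space_PiM PiE_iff indicator_def)
      then show "(\<Prod>i\<in>I. g (x i)) * indicator (PiE I A) x = (\<Prod>i\<in>I. g (x i) * indicator (A i) (x i))"
        by (simp add: prod.distrib)
    qed
    also have "\<dots> = (\<Prod>i\<in>I. \<integral>\<^sup>+y. g y * indicator (A i) y \<partial>lborel)"
      by (rule PL.product_nn_integral_prod[OF I]) (use A' in simp)
    also have "\<dots> = (\<Prod>i\<in>I. emeasure (density lborel g) (A i))"
      by (rule prod.cong[OF refl], rule emeasure_density[symmetric]) (use A' in auto)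
    finally show "emeasure (density (PiM I (\<lambda>_. lborel)) (\<lambda>x. \<Prod>i\<in>I. g (x i))) (PiE I A) = (\<Prod>i\<in>I. emeasure (density lborel g) (A i))" .
  qed
qed

lemma sf_density_prob: "prob_space (density M g) \<Longrightarrow> sigma_finite_measure (density M g)"
  by (rule prob_space_imp_sigma_finite)

lemma Q_BIG:
  fixes f :: "real \<Rightarrow> real" and h :: "real \<times> real \<Rightarrow> ennreal"
  assumes n: "n \<ge> 2" and fnn: "\<And>x. 0 \<le> f x" and fm[measurable]: "f \<in> borel_measurable borel"
    and hm[measurable]: "h \<in> borel_measurable (lborel \<Otimes>\<^sub>M lborel)"
    and p1: "prob_space (density lborel (\<lambda>x. ennreal (f x * indicator {0..} x)))"
    and p2: "prob_space (density lborel (\<lambda>x. ennreal (uu x)))"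
  shows "(\<integral>\<^sup>+w. h (J_n n (fst w) + snd (snd (snd w)),
       sqrt (((\<Sum>i<n-1. fst w i * cos (fst (snd w) i)) + snd (snd (snd w)) * cos (fst (snd (snd w))))\<^sup>2 +
             ((\<Sum>i<n-1. fst w i * sin (fst (snd w) i)) + snd (snd (snd w)) * sin (fst (snd (snd w))))\<^sup>2))
     \<partial>(PiM {..<n-1} (\<lambda>_. density lborel (\<lambda>x. ennreal (f x * indicator {0..} x))) \<Otimes>\<^sub>M
       (PiM {..<n-1} (\<lambda>_. density lborel (\<lambda>x. ennreal (uu x))) \<Otimes>\<^sub>M
        (density lborel (\<lambda>x. ennreal (uu x)) \<Otimes>\<^sub>M density lborel (\<lambda>x. ennreal (f x * indicator {0..} x))))))
    = (\<integral>\<^sup>+x. \<integral>\<^sup>+\<xi>. ennreal (\<Prod>i<n-1. f (x i) * indicator {0..} (x i)) * ennreal (\<Prod>i<n-1. uu (\<xi> i)) *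
      (\<integral>\<^sup>+\<phi>. ennreal (uu \<phi>) * (\<integral>\<^sup>+r. ennreal (f r * indicator {0..} r) *
         h (J_n n x + r, sqrt (((\<Sum>i<n-1. x i * cos (\<xi> i)) + r * cos \<phi>)\<^sup>2 + ((\<Sum>i<n-1. x i * sin (\<xi> i)) + r * sin \<phi>)\<^sup>2)) \<partial>lborel) \<partial>lborel)
      \<partial>PiM {..<n-1} (\<lambda>_. lborel) \<partial>PiM {..<n-1} (\<lambda>_. lborel))"
proof -
  define g1 where "g1 x = ennreal (f x * indicator {0..} x)" for x
  define g2 where "g2 x = ennreal (uu x)" for x
  have g1m[measurable]: "g1 \<in> borel_measurable borel" unfolding g1_def by measurable
  have g2m[measurable]: "g2 \<in> borel_measurable borel" unfolding g2_def by measurable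
  define PX where "PX = PiM {..<n-1} (\<lambda>_. lborel :: real measure)"
  define G1 where "G1 x = (\<Prod>i<n-1. g1 (x i))" for x
  define G2 where "G2 x = (\<Prod>i<n-1. g2 (x i))" for x
  have G1m[measurable]: "G1 \<in> borel_measurable PX"
    unfolding G1_def PX_def
    apply (rule borel_measurable_prod_ennreal)
    apply (rule measurable_compose[where g=g1 and N=lborel])
     apply (rule measurable_component_singleton)
     apply simp
    apply simp
    done
  have G2m[measurable]: "G2 \<in> borel_measurable PX"
    unfolding G2_def PX_def
    apply (rule borel_measurable_prod_ennreal)
    apply (rule measurable_compose[where g=g2 and N=lborel])
     apply (rule measurable_component_singleton)
     apply simp
    apply simp
    done
  have sfPX: "sigma_finite_measure PX" unfolding PX_def by (rule sf_PiM_lborel) simp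
  interpret PXs: sigma_finite_measure PX by (rule sfPX)
  have sf1: "sigma_finite_measure (density lborel g1)" unfolding g1_def by (rule sf_density_prob[OF p1])
  have sf2: "sigma_finite_measure (density lborel g2)" unfolding g2_def by (rule sf_density_prob[OF p2])
  have D1: "PiM {..<n-1} (\<lambda>_. density lborel g1) = density PX G1"
    unfolding PX_def G1_def by (rule DENS[OF _ g1m sf1]) simp
  have D2: "PiM {..<n-1} (\<lambda>_. density lborel g2) = density PX G2"
    unfolding PX_def G2_def by (rule DENS[OF _ g2m sf2]) simp
  define D34 where "D34 = (\<lambda>(\<phi>, r). g2 \<phi> * g1 r)"
  have D34m[measurable]: "D34 \<in> borel_measurable (lborel \<Otimes>\<^sub>M lborel)" unfolding D34_def by measurable
  have E34: "density lborel g2 \<Otimes>\<^sub>M density lborel g1 = density (lborel \<Otimes>\<^sub>M lborel) D34"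
    unfolding D34_def by (rule pair_measure_density) (auto simp: sf1 lborel.sigma_finite_measure_axioms)
  have sfL2: "sigma_finite_measure (lborel \<Otimes>\<^sub>M lborel :: (real \<times> real) measure)"
    by (rule lborel_pair.P.sigma_finite_measure_axioms)
  have sf34: "sigma_finite_measure (density (lborel \<Otimes>\<^sub>M lborel) D34)"
    unfolding E34[symmetric] by (rule sigma_finite_pair_measure[OF sf2 sf1])
  define D234 where "D234 = (\<lambda>(\<xi>, u). G2 \<xi> * D34 u)"
  have D234m[measurable]: "D234 \<in> borel_measurable (PX \<Otimes>\<^sub>M (lborel \<Otimes>\<^sub>M lborel))" unfolding D234_def by measurable
  have E234: "density PX G2 \<Otimes>\<^sub>M density (lborel \<Otimes>\<^sub>M lborel) D34 = density (PX \<Otimes>\<^sub>M (lborel \<Otimes>\<^sub>M lborel)) D234"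
    unfolding D234_def by (rule pair_measure_density) (auto simp: sfL2 sf34)
  have sfPX2: "sigma_finite_measure (PiM {..<n-1} (\<lambda>_. density lborel g2))"
    using product_sigma_finite.sigma_finite[of "\<lambda>_. density lborel g2" "{..<n-1}"] sf2
    by (simp add: product_sigma_finite_def)
  have sf234: "sigma_finite_measure (density (PX \<Otimes>\<^sub>M (lborel \<Otimes>\<^sub>M lborel)) D234)"
    unfolding E234[symmetric] D2[symmetric] E34[symmetric] by (rule sigma_finite_pair_measure[OF sfPX2 sigma_finite_pair_measure[OF sf2 sf1]])
  have sfR: "sigma_finite_measure (PX \<Otimes>\<^sub>M (lborel \<Otimes>\<^sub>M lborel :: (real \<times> real) measure))"
    by (rule sigma_finite_pair_measure[OF sfPX sfL2])
  define Dw where "Dw = (\<lambda>(x, v). G1 x * D234 v)"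
  have Dwm[measurable]: "Dw \<in> borel_measurable (PX \<Otimes>\<^sub>M (PX \<Otimes>\<^sub>M (lborel \<Otimes>\<^sub>M lborel)))" unfolding Dw_def by measurable
  have Qeq: "PiM {..<n-1} (\<lambda>_. density lborel g1) \<Otimes>\<^sub>M (PiM {..<n-1} (\<lambda>_. density lborel g2) \<Otimes>\<^sub>M (density lborel g2 \<Otimes>\<^sub>M density lborel g1))
      = density (PX \<Otimes>\<^sub>M (PX \<Otimes>\<^sub>M (lborel \<Otimes>\<^sub>M lborel))) Dw"
    unfolding D1 D2 E34 E234 Dw_def by (rule pair_measure_density) (auto simp: sfR sf234)
  define F where "F w = h (J_n n (fst w) + snd (snd (snd w)),
       sqrt (((\<Sum>i<n-1. fst w i * cos (fst (snd w) i)) + snd (snd (snd w)) * cos (fst (snd (snd w))))\<^sup>2 +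
             ((\<Sum>i<n-1. fst w i * sin (fst (snd w) i)) + snd (snd (snd w)) * sin (fst (snd (snd w))))\<^sup>2))"
    for w :: "(nat \<Rightarrow> real) \<times> (nat \<Rightarrow> real) \<times> real \<times> real"
  have Fm[measurable]: "F \<in> borel_measurable (PX \<Otimes>\<^sub>M (PX \<Otimes>\<^sub>M (lborel \<Otimes>\<^sub>M lborel)))"
    unfolding F_def PX_def J_n_def by measurable
  define Kf where "Kf w = Dw w * F w" for w
  have Kfm[measurable]: "Kf \<in> borel_measurable (PX \<Otimes>\<^sub>M (PX \<Otimes>\<^sub>M (lborel \<Otimes>\<^sub>M lborel)))"
    unfolding Kf_def by measurable
  interpret R: sigma_finite_measure "PX \<Otimes>\<^sub>M (lborel \<Otimes>\<^sub>M lborel :: (real \<times> real) measure)" by (rule sfR)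
  have g1eq: "(\<lambda>x. ennreal (f x * indicator {0..} x)) = g1" by (simp add: g1_def fun_eq_iff)
  have g2eq: "(\<lambda>x. ennreal (uu x)) = g2" by (simp add: g2_def fun_eq_iff)
  have "(\<integral>\<^sup>+w. F w \<partial>(PiM {..<n-1} (\<lambda>_. density lborel g1) \<Otimes>\<^sub>M (PiM {..<n-1} (\<lambda>_. density lborel g2) \<Otimes>\<^sub>M (density lborel g2 \<Otimes>\<^sub>M density lborel g1))))
      = (\<integral>\<^sup>+w. Kf w \<partial>(PX \<Otimes>\<^sub>M (PX \<Otimes>\<^sub>M (lborel \<Otimes>\<^sub>M lborel))))"
    unfolding Qeq Kf_def by (rule nn_integral_density[OF Dwm Fm])
  also have "\<dots> = (\<integral>\<^sup>+x. \<integral>\<^sup>+v. Kf (x, v) \<partial>(PX \<Otimes>\<^sub>M (lborel \<Otimes>\<^sub>M lborel)) \<partial>PX)"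
    by (rule R.nn_integral_fst[symmetric]) (rule Kfm)
  also have "\<dots> = (\<integral>\<^sup>+x. \<integral>\<^sup>+\<xi>. \<integral>\<^sup>+u. Kf (x, \<xi>, u) \<partial>(lborel \<Otimes>\<^sub>M lborel) \<partial>PX \<partial>PX)"
  proof (rule nn_integral_cong)
    fix x assume x: "x \<in> space PX"
    show "(\<integral>\<^sup>+v. Kf (x, v) \<partial>(PX \<Otimes>\<^sub>M (lborel \<Otimes>\<^sub>M lborel))) = (\<integral>\<^sup>+\<xi>. \<integral>\<^sup>+u. Kf (x, \<xi>, u) \<partial>(lborel \<Otimes>\<^sub>M lborel) \<partial>PX)"
      by (rule sigma_finite_measure.nn_integral_fst[OF sfL2, symmetric, where f="\<lambda>v. Kf (x, v)", simplified]) (rule measurable_Pair2[OF Kfm x])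
  qed
  also have "\<dots> = (\<integral>\<^sup>+x. \<integral>\<^sup>+\<xi>. \<integral>\<^sup>+\<phi>. \<integral>\<^sup>+r. Kf (x, \<xi>, \<phi>, r) \<partial>lborel \<partial>lborel \<partial>PX \<partial>PX)"
  proof (rule nn_integral_cong)+
    fix x \<xi> assume x: "x \<in> space PX" and \<xi>: "\<xi> \<in> space PX"
    have "(\<lambda>v. Kf (x, v)) \<in> borel_measurable (PX \<Otimes>\<^sub>M (lborel \<Otimes>\<^sub>M lborel))" by (rule measurable_Pair2[OF Kfm x])
    from measurable_Pair2[OF this \<xi>]
    show "(\<integral>\<^sup>+u. Kf (x, \<xi>, u) \<partial>(lborel \<Otimes>\<^sub>M lborel)) = (\<integral>\<^sup>+\<phi>. \<integral>\<^sup>+r. Kf (x, \<xi>, \<phi>, r) \<partial>lborel \<partial>lborel)"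
      by (rule lborel.nn_integral_fst[symmetric, where f="\<lambda>u. Kf (x, \<xi>, u)", simplified])
  qed
  also have "\<dots> = (\<integral>\<^sup>+x. \<integral>\<^sup>+\<xi>. ennreal (\<Prod>i<n-1. f (x i) * indicator {0..} (x i)) * ennreal (\<Prod>i<n-1. uu (\<xi> i)) *
      (\<integral>\<^sup>+\<phi>. ennreal (uu \<phi>) * (\<integral>\<^sup>+r. ennreal (f r * indicator {0..} r) *
         h (J_n n x + r, sqrt (((\<Sum>i<n-1. x i * cos (\<xi> i)) + r * cos \<phi>)\<^sup>2 + ((\<Sum>i<n-1. x i * sin (\<xi> i)) + r * sin \<phi>)\<^sup>2)) \<partial>lborel) \<partial>lborel)
      \<partial>PX \<partial>PX)"
  proof (rule nn_integral_cong)+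
    fix x \<xi> :: "nat \<Rightarrow> real"
    define c where "c = ennreal (\<Prod>i<n-1. f (x i) * indicator {0..} (x i)) * ennreal (\<Prod>i<n-1. uu (\<xi> i))"
    define H where "H \<phi> r = h (J_n n x + r, sqrt (((\<Sum>i<n-1. x i * cos (\<xi> i)) + r * cos \<phi>)\<^sup>2 + ((\<Sum>i<n-1. x i * sin (\<xi> i)) + r * sin \<phi>)\<^sup>2))" for \<phi> r
    have Hm[measurable]: "(\<lambda>(\<phi>, r). H \<phi> r) \<in> borel_measurable (lborel \<Otimes>\<^sub>M lborel)" unfolding H_def by measurable
    have cG: "G1 x * G2 \<xi> = c"
      unfolding c_def G1_def G2_def g1_def g2_def
      by (simp add: prod_ennreal fnn uu_nonneg)
    have K: "Kf (x, \<xi>, \<phi>, r) = (c * g2 \<phi>) * (g1 r * H \<phi> r)" for \<phi> r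
      by (simp add: Kf_def Dw_def D234_def D34_def F_def H_def cG[symmetric] mult_ac)
    have "(\<integral>\<^sup>+\<phi>. \<integral>\<^sup>+r. Kf (x, \<xi>, \<phi>, r) \<partial>lborel \<partial>lborel) = (\<integral>\<^sup>+\<phi>. (c * g2 \<phi>) * \<integral>\<^sup>+r. g1 r * H \<phi> r \<partial>lborel \<partial>lborel)"
      unfolding K by (rule nn_integral_cong, rule nn_integral_cmult) (simp add: g1m)
    also have "\<dots> = (\<integral>\<^sup>+\<phi>. c * (g2 \<phi> * \<integral>\<^sup>+r. g1 r * H \<phi> r \<partial>lborel) \<partial>lborel)"
      by (simp add: mult.assoc)
    also have "\<dots> = c * (\<integral>\<^sup>+\<phi>. g2 \<phi> * \<integral>\<^sup>+r. g1 r * H \<phi> r \<partial>lborel \<partial>lborel)"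
      by (rule nn_integral_cmult) measurable
    finally show "(\<integral>\<^sup>+\<phi>. \<integral>\<^sup>+r. Kf (x, \<xi>, \<phi>, r) \<partial>lborel \<partial>lborel) = ennreal (\<Prod>i<n-1. f (x i) * indicator {0..} (x i)) * ennreal (\<Prod>i<n-1. uu (\<xi> i)) *
      (\<integral>\<^sup>+\<phi>. ennreal (uu \<phi>) * (\<integral>\<^sup>+r. ennreal (f r * indicator {0..} r) *
         h (J_n n x + r, sqrt (((\<Sum>i<n-1. x i * cos (\<xi> i)) + r * cos \<phi>)\<^sup>2 + ((\<Sum>i<n-1. x i * sin (\<xi> i)) + r * sin \<phi>)\<^sup>2)) \<partial>lborel) \<partial>lborel)"
      unfolding c_def H_def g1_def g2_def .
  qed
  finally show ?thesis unfolding g1eq g2eq F_def PX_def .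
qed

lemma PL:
  fixes M :: "'a measure" and n :: nat
    and R \<Theta> :: "nat \<Rightarrow> 'a \<Rightarrow> real" and f :: "real \<Rightarrow> real" and h :: "real \<times> real \<Rightarrow> ennreal"
  assumes PM: "prob_space M"
    and n: "n \<ge> 2"
    and fnn: "\<And>x. 0 \<le> f x"
    and fm: "f \<in> borel_measurable lborel"
    and Rnn: "\<And>i. i < n \<Longrightarrow> \<forall>\<omega>\<in>space M. 0 \<le> R i \<omega>"
    and Rd: "\<And>i. i < n \<Longrightarrow> distributed M lborel (R i) (\<lambda>x. ennreal (f x))"
    and Td: "\<And>i. i < n \<Longrightarrow> distributed M lborel (\<Theta> i)
            (\<lambda>x. ennreal (indicator {0..<2*pi} x / (2*pi)))"
    and ind: "prob_space.indep_vars M (\<lambda>_. borel) (case_sum R \<Theta>) (Inl ` {..<n} \<union> Inr ` {..<n})"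
    and hm[measurable]: "h \<in> borel_measurable (lborel \<Otimes>\<^sub>M lborel)"
  shows "(\<lambda>\<omega>. ((\<Sum>i<n. R i \<omega>),
                  sqrt ((\<Sum>i<n. R i \<omega> * cos (\<Theta> i \<omega>))\<^sup>2 + (\<Sum>i<n. R i \<omega> * sin (\<Theta> i \<omega>))\<^sup>2)))
          \<in> M \<rightarrow>\<^sub>M (lborel \<Otimes>\<^sub>M lborel)"
    and "(\<integral>\<^sup>+\<omega>. h ((\<Sum>i<n. R i \<omega>),
                  sqrt ((\<Sum>i<n. R i \<omega> * cos (\<Theta> i \<omega>))\<^sup>2 + (\<Sum>i<n. R i \<omega> * sin (\<Theta> i \<omega>))\<^sup>2)) \<partial>M)
    = (\<integral>\<^sup>+x. \<integral>\<^sup>+\<xi>. ennreal (\<Prod>i<n-1. f (x i) * indicator {0..} (x i)) * ennreal (\<Prod>i<n-1. uu (\<xi> i)) *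
      (\<integral>\<^sup>+\<phi>. ennreal (uu \<phi>) * (\<integral>\<^sup>+r. ennreal (f r * indicator {0..} r) *
         h (J_n n x + r, sqrt (((\<Sum>i<n-1. x i * cos (\<xi> i)) + r * cos \<phi>)\<^sup>2 + ((\<Sum>i<n-1. x i * sin (\<xi> i)) + r * sin \<phi>)\<^sup>2)) \<partial>lborel) \<partial>lborel)
      \<partial>PiM {..<n-1} (\<lambda>_. lborel) \<partial>PiM {..<n-1} (\<lambda>_. lborel))"
proof -
  interpret M: prob_space M by (rule PM)
  have fm'[measurable]: "f \<in> borel_measurable borel" using fm by simp
  obtain m where nm: "n = Suc m" using n by (cases n) auto
  define T where "T = Inl ` {..<n} \<union> Inr ` {..<n}"
  define g1 where "g1 x = ennreal (f x * indicator {0..} x)" for x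
  define g2 where "g2 x = ennreal (uu x)" for x
  have g1m[measurable]: "g1 \<in> borel_measurable borel" unfolding g1_def by measurable
  have g2m[measurable]: "g2 \<in> borel_measurable borel" unfolding g2_def by measurable
  have Rm: "R i \<in> borel_measurable M" if "i < n" for i
    using distributed_measurable[OF Rd[OF that]] by simp
  have Tm: "\<Theta> i \<in> borel_measurable M" if "i < n" for i
    using distributed_measurable[OF Td[OF that]] by simp
  have distR: "distr M borel (R i) = density lborel g1" if i: "i < n" for i
  proof -
    have "distr M borel (R i) = distr M lborel (R i)"
      by (rule distr_cong) simp_all
    also have "\<dots> = density lborel (\<lambda>x. ennreal (f x))"
      by (rule distributed_distr_eq_density[OF Rd[OF i]])
    also have "\<dots> = density lborel g1"
    proof (rule density_cong)
      have "emeasure (density lborel (\<lambda>x. ennreal (f x))) {..<0} = emeasure (distr M lborel (R i)) {..<0}"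
        using distributed_distr_eq_density[OF Rd[OF i]] by simp
      also have "\<dots> = emeasure M (R i -` {..<0} \<inter> space M)"
        by (rule emeasure_distr) (use Rm[OF i] in simp_all)
      also have "R i -` {..<0} \<inter> space M = {}" using Rnn[OF i] by force
      finally have "(\<integral>\<^sup>+x. ennreal (f x) * indicator {..<0} x \<partial>lborel) = 0"
        by (subst (asm) emeasure_density) simp_all
      then have "AE x in lborel. ennreal (f x) * indicator {..<0} x = 0"
        by (subst (asm) nn_integral_0_iff_AE) simp_all
      then show "AE x in lborel. ennreal (f x) = g1 x"
        by (rule eventually_mono) (auto simp: g1_def indicator_def split: if_splits)
    qed simp_all
    finally show ?thesis .
  qed
  have distT: "distr M borel (\<Theta> i) = density lborel g2" if i: "i < n" for i
  proof -
    have "distr M borel (\<Theta> i) = distr M lborel (\<Theta> i)"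
      by (rule distr_cong) simp_all
    also have "\<dots> = density lborel g2"
    proof -
      have g2eq: "g2 = (\<lambda>x. ennreal (indicator {0..<2*pi} x / (2*pi)))" by (simp add: fun_eq_iff g2_def uu_def)
      show ?thesis unfolding g2eq by (rule distributed_distr_eq_density[OF Td[OF i]])
    qed
    finally show ?thesis .
  qed
  have p1: "prob_space (density lborel g1)"
    using M.prob_space_distr[OF Rm[of 0]] distR[of 0] n by simp
  have p2: "prob_space (density lborel g2)"
    using M.prob_space_distr[OF Tm[of 0]] distT[of 0] n by simp
  define NN where "NN i = (case i of Inl _ \<Rightarrow> density lborel g1 | Inr _ \<Rightarrow> density lborel g2)" for i :: "nat + nat"
  define V where "V \<omega> = (\<lambda>i\<in>T. case_sum R \<Theta> i \<omega>)" for \<omega>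
  have rv: "case_sum R \<Theta> i \<in> M \<rightarrow>\<^sub>M borel" if "i \<in> T" for i
    using that Rm Tm by (auto simp: T_def)
  have Vdist: "distr M (PiM T (\<lambda>_. borel)) V = PiM T NN"
  proof -
    have ne: "T \<noteq> {}" using n unfolding T_def by (auto simp: lessThan_empty_iff)
    have iff: "M.indep_vars (\<lambda>_. borel) (case_sum R \<Theta>) T \<longleftrightarrow>
        distr M (PiM T (\<lambda>_. borel)) (\<lambda>x. \<lambda>i\<in>T. case_sum R \<Theta> i x) = PiM T (\<lambda>i. distr M borel (case_sum R \<Theta> i))"
      by (rule M.indep_vars_iff_distr_eq_PiM'[OF ne rv])
    have "distr M (PiM T (\<lambda>_. borel)) V = PiM T (\<lambda>i. distr M borel (case_sum R \<Theta> i))"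
      using iff ind unfolding V_def T_def by simp
    also have "\<dots> = PiM T NN"
      by (rule PiM_cong) (auto simp: T_def NN_def distR distT)
    finally show ?thesis .
  qed
  have Vm: "V \<in> M \<rightarrow>\<^sub>M PiM T (\<lambda>_. borel)"
    unfolding V_def by (rule measurable_restrict) (rule rv)
  have m1: "n - 1 = m" using nm by simp
  have TS: "T = Inl ` {..<Suc m} \<union> Inr ` {..<Suc m}" unfolding T_def nm ..
  define H' where "H' v = ((\<Sum>i<n. v (Inl i)),
        sqrt ((\<Sum>i<n. v (Inl i) * cos (v (Inr i)))\<^sup>2 + (\<Sum>i<n. v (Inl i) * sin (v (Inr i)))\<^sup>2))" for v :: "nat + nat \<Rightarrow> real"
  have compL: "(\<lambda>v::nat+nat\<Rightarrow>real. v (Inl i)) \<in> borel_measurable (PiM T (\<lambda>_. borel))" if "i < n" for i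
    by (rule measurable_component_singleton) (use that in \<open>simp add: T_def\<close>)
  have compR: "(\<lambda>v::nat+nat\<Rightarrow>real. v (Inr i)) \<in> borel_measurable (PiM T (\<lambda>_. borel))" if "i < n" for i
    by (rule measurable_component_singleton) (use that in \<open>simp add: T_def\<close>)
  have S1[measurable]: "(\<lambda>v::nat+nat\<Rightarrow>real. \<Sum>i<n. v (Inl i)) \<in> borel_measurable (PiM T (\<lambda>_. borel))"
    by (rule borel_measurable_sum) (simp add: compL)
  have S2[measurable]: "(\<lambda>v::nat+nat\<Rightarrow>real. \<Sum>i<n. v (Inl i) * cos (v (Inr i))) \<in> borel_measurable (PiM T (\<lambda>_. borel))"
  proof (rule borel_measurable_sum)
    fix i assume "i \<in> {..<n}"
    then have [measurable]: "(\<lambda>v::nat+nat\<Rightarrow>real. v (Inl i)) \<in> borel_measurable (PiM T (\<lambda>_. borel))" "(\<lambda>v::nat+nat\<Rightarrow>real. v (Inr i)) \<in> borel_measurable (PiM T (\<lambda>_. borel))"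
      using compL compR by auto
    show "(\<lambda>v::nat+nat\<Rightarrow>real. v (Inl i) * cos (v (Inr i))) \<in> borel_measurable (PiM T (\<lambda>_. borel))" by measurable
  qed
  have S3[measurable]: "(\<lambda>v::nat+nat\<Rightarrow>real. \<Sum>i<n. v (Inl i) * sin (v (Inr i))) \<in> borel_measurable (PiM T (\<lambda>_. borel))"
  proof (rule borel_measurable_sum)
    fix i assume "i \<in> {..<n}"
    then have [measurable]: "(\<lambda>v::nat+nat\<Rightarrow>real. v (Inl i)) \<in> borel_measurable (PiM T (\<lambda>_. borel))" "(\<lambda>v::nat+nat\<Rightarrow>real. v (Inr i)) \<in> borel_measurable (PiM T (\<lambda>_. borel))"
      using compL compR by auto
    show "(\<lambda>v::nat+nat\<Rightarrow>real. v (Inl i) * sin (v (Inr i))) \<in> borel_measurable (PiM T (\<lambda>_. borel))" by measurable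
  qed
  have H'm: "H' \<in> PiM T (\<lambda>_. borel) \<rightarrow>\<^sub>M (lborel \<Otimes>\<^sub>M lborel)"
    unfolding H'_def by measurable
  have XV: "((\<Sum>i<n. R i \<omega>), sqrt ((\<Sum>i<n. R i \<omega> * cos (\<Theta> i \<omega>))\<^sup>2 + (\<Sum>i<n. R i \<omega> * sin (\<Theta> i \<omega>))\<^sup>2)) = H' (V \<omega>)" for \<omega>
    unfolding H'_def V_def T_def by simp
  show "(\<lambda>\<omega>. ((\<Sum>i<n. R i \<omega>),
                  sqrt ((\<Sum>i<n. R i \<omega> * cos (\<Theta> i \<omega>))\<^sup>2 + (\<Sum>i<n. R i \<omega> * sin (\<Theta> i \<omega>))\<^sup>2)))
          \<in> M \<rightarrow>\<^sub>M (lborel \<Otimes>\<^sub>M lborel)"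
    unfolding XV by (rule measurable_compose[OF Vm H'm])
  define N1 where "N1 = density lborel g1"
  define N2 where "N2 = density lborel g2"
  have NNeq: "NN = (\<lambda>i. case i of Inl _ \<Rightarrow> N1 | Inr _ \<Rightarrow> N2)" by (simp add: NN_def N1_def N2_def fun_eq_iff split: sum.split)
  have D: "distr (PiM {..<m} (\<lambda>_. N1) \<Otimes>\<^sub>M (PiM {..<m} (\<lambda>_. N2) \<Otimes>\<^sub>M (N2 \<Otimes>\<^sub>M N1))) (PiM T (\<lambda>_. borel)) (Psi m) = PiM T NN"
    unfolding TS NNeq N1_def N2_def
    by (rule DIST) (auto simp: sf_density_prob p1 p2)
  have Psim: "Psi m \<in> (PiM {..<m} (\<lambda>_. N1) \<Otimes>\<^sub>M (PiM {..<m} (\<lambda>_. N2) \<Otimes>\<^sub>M (N2 \<Otimes>\<^sub>M N1))) \<rightarrow>\<^sub>M PiM T (\<lambda>_. borel)"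
    unfolding TS N1_def N2_def by (rule Psi_meas) simp_all
  have hH[measurable]: "(\<lambda>v. h (H' v)) \<in> borel_measurable (PiM T (\<lambda>_. borel))"
    by (rule measurable_compose[OF H'm hm])
  have sumL: "(\<Sum>i<n. Psi m w (Inl i)) = J_n n (fst w) + snd (snd (snd w))" for w
    unfolding nm J_n_def by (simp add: Psi_def)
  have sumC: "(\<Sum>i<n. Psi m w (Inl i) * cos (Psi m w (Inr i))) = (\<Sum>i<m. fst w i * cos (fst (snd w) i)) + snd (snd (snd w)) * cos (fst (snd (snd w)))" for w
    unfolding nm by (auto simp: Psi_def intro!: sum.cong)
  have sumS: "(\<Sum>i<n. Psi m w (Inl i) * sin (Psi m w (Inr i))) = (\<Sum>i<m. fst w i * sin (fst (snd w) i)) + snd (snd (snd w)) * sin (fst (snd (snd w)))" for w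
    unfolding nm by (auto simp: Psi_def intro!: sum.cong)
  have "(\<integral>\<^sup>+\<omega>. h ((\<Sum>i<n. R i \<omega>),
                  sqrt ((\<Sum>i<n. R i \<omega> * cos (\<Theta> i \<omega>))\<^sup>2 + (\<Sum>i<n. R i \<omega> * sin (\<Theta> i \<omega>))\<^sup>2)) \<partial>M)
      = (\<integral>\<^sup>+\<omega>. h (H' (V \<omega>)) \<partial>M)" unfolding XV ..
  also have "\<dots> = (\<integral>\<^sup>+v. h (H' v) \<partial>distr M (PiM T (\<lambda>_. borel)) V)"
    by (rule nn_integral_distr[OF Vm, symmetric]) simp
  also have "\<dots> = (\<integral>\<^sup>+v. h (H' v) \<partial>distr (PiM {..<m} (\<lambda>_. N1) \<Otimes>\<^sub>M (PiM {..<m} (\<lambda>_. N2) \<Otimes>\<^sub>M (N2 \<Otimes>\<^sub>M N1))) (PiM T (\<lambda>_. borel)) (Psi m))"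
    unfolding Vdist D ..
  also have "\<dots> = (\<integral>\<^sup>+w. h (H' (Psi m w)) \<partial>(PiM {..<m} (\<lambda>_. N1) \<Otimes>\<^sub>M (PiM {..<m} (\<lambda>_. N2) \<Otimes>\<^sub>M (N2 \<Otimes>\<^sub>M N1))))"
    by (rule nn_integral_distr[OF Psim]) simp
  also have "\<dots> = (\<integral>\<^sup>+w. h (J_n n (fst w) + snd (snd (snd w)),
       sqrt (((\<Sum>i<m. fst w i * cos (fst (snd w) i)) + snd (snd (snd w)) * cos (fst (snd (snd w))))\<^sup>2 +
             ((\<Sum>i<m. fst w i * sin (fst (snd w) i)) + snd (snd (snd w)) * sin (fst (snd (snd w))))\<^sup>2))
     \<partial>(PiM {..<m} (\<lambda>_. N1) \<Otimes>\<^sub>M (PiM {..<m} (\<lambda>_. N2) \<Otimes>\<^sub>M (N2 \<Otimes>\<^sub>M N1))))"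
    unfolding H'_def sumL sumC sumS ..
  also have "\<dots> = (\<integral>\<^sup>+x. \<integral>\<^sup>+\<xi>. ennreal (\<Prod>i<n-1. f (x i) * indicator {0..} (x i)) * ennreal (\<Prod>i<n-1. uu (\<xi> i)) *
      (\<integral>\<^sup>+\<phi>. ennreal (uu \<phi>) * (\<integral>\<^sup>+r. ennreal (f r * indicator {0..} r) *
         h (J_n n x + r, sqrt (((\<Sum>i<n-1. x i * cos (\<xi> i)) + r * cos \<phi>)\<^sup>2 + ((\<Sum>i<n-1. x i * sin (\<xi> i)) + r * sin \<phi>)\<^sup>2)) \<partial>lborel) \<partial>lborel)
      \<partial>PiM {..<n-1} (\<lambda>_. lborel) \<partial>PiM {..<n-1} (\<lambda>_. lborel))"
    using Q_BIG[OF n fnn fm' hm p1[unfolded g1_def] p2[unfolded g2_def]]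
    unfolding m1 N1_def N2_def g1_def g2_def .
  finally show "(\<integral>\<^sup>+\<omega>. h ((\<Sum>i<n. R i \<omega>),
                  sqrt ((\<Sum>i<n. R i \<omega> * cos (\<Theta> i \<omega>))\<^sup>2 + (\<Sum>i<n. R i \<omega> * sin (\<Theta> i \<omega>))\<^sup>2)) \<partial>M)
    = (\<integral>\<^sup>+x. \<integral>\<^sup>+\<xi>. ennreal (\<Prod>i<n-1. f (x i) * indicator {0..} (x i)) * ennreal (\<Prod>i<n-1. uu (\<xi> i)) *
      (\<integral>\<^sup>+\<phi>. ennreal (uu \<phi>) * (\<integral>\<^sup>+r. ennreal (f r * indicator {0..} r) *
         h (J_n n x + r, sqrt (((\<Sum>i<n-1. x i * cos (\<xi> i)) + r * cos \<phi>)\<^sup>2 + ((\<Sum>i<n-1. x i * sin (\<xi> i)) + r * sin \<phi>)\<^sup>2)) \<partial>lborel) \<partial>lborel)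
      \<partial>PiM {..<n-1} (\<lambda>_. lborel) \<partial>PiM {..<n-1} (\<lambda>_. lborel))" .
qed

theorem proposition1:
  fixes M :: "'a measure" and n :: nat
    and R \<Theta> :: "nat \<Rightarrow> 'a \<Rightarrow> real" and f :: "real \<Rightarrow> real"
  assumes "prob_space M"
    and "n \<ge> 2"
    and "\<And>x. 0 \<le> f x"
    and "f \<in> borel_measurable lborel"
    and "\<And>i. i < n \<Longrightarrow> \<forall>\<omega>\<in>space M. 0 \<le> R i \<omega>"
    and "\<And>i. i < n \<Longrightarrow> distributed M lborel (R i) (\<lambda>x. ennreal (f x))"
    and "\<And>i. i < n \<Longrightarrow> distributed M lborel (\<Theta> i)
            (\<lambda>x. ennreal (indicator {0..<2*pi} x / (2*pi)))"
    and "prob_space.indep_vars M (\<lambda>_. borel) (case_sum R \<Theta>) (Inl ` {..<n} \<union> Inr ` {..<n})"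
  shows "distributed M lborel
           (\<lambda>\<omega>. ((\<Sum>i<n. R i \<omega>),
                  sqrt ((\<Sum>i<n. R i \<omega> * cos (\<Theta> i \<omega>))\<^sup>2 + (\<Sum>i<n. R i \<omega> * sin (\<Theta> i \<omega>))\<^sup>2)))
           (joint_density f n)"
proof -
  note A = assms
  have fm'[measurable]: "f \<in> borel_measurable borel" using A(4) by simp
  define X where "X \<omega> = ((\<Sum>i<n. R i \<omega>),
                  sqrt ((\<Sum>i<n. R i \<omega> * cos (\<Theta> i \<omega>))\<^sup>2 + (\<Sum>i<n. R i \<omega> * sin (\<Theta> i \<omega>))\<^sup>2))" for \<omega>
  have Xm2: "X \<in> M \<rightarrow>\<^sub>M (lborel \<Otimes>\<^sub>M lborel)"
    unfolding X_def by (rule PL(1)[OF A, where h="\<lambda>_::real\<times>real. 0::ennreal"]) auto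
  have Xm: "X \<in> M \<rightarrow>\<^sub>M lborel" using Xm2 by (simp add: lborel_prod)
  interpret PX: sigma_finite_measure "PiM {..<n-1} (\<lambda>_. lborel :: real measure)"
    by (rule sf_PiM_lborel) simp
  have I1: "case_prod (\<lambda>p x. \<integral>\<^sup>+\<xi>. Gfun n f p x \<xi> \<partial>PiM {..<n-1} (\<lambda>_. lborel)) \<in> borel_measurable ((lborel \<Otimes>\<^sub>M lborel) \<Otimes>\<^sub>M PiM {..<n-1} (\<lambda>_. lborel))"
  proof -
    have G: "case_prod (\<lambda>px \<xi>. Gfun n f (fst px) (snd px) \<xi>) \<in> borel_measurable (((lborel \<Otimes>\<^sub>M lborel) \<Otimes>\<^sub>M PiM {..<n-1} (\<lambda>_. lborel)) \<Otimes>\<^sub>M PiM {..<n-1} (\<lambda>_. lborel))"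
      unfolding split_beta' Gfun_alt by measurable
    show ?thesis using PX.borel_measurable_nn_integral[OF G] by (simp add: split_beta')
  qed
  have I2: "(\<lambda>p. \<integral>\<^sup>+x. \<integral>\<^sup>+\<xi>. Gfun n f p x \<xi> \<partial>PiM {..<n-1} (\<lambda>_. lborel) \<partial>PiM {..<n-1} (\<lambda>_. lborel)) \<in> borel_measurable (lborel \<Otimes>\<^sub>M lborel)"
    by (rule PX.borel_measurable_nn_integral[OF I1])
  have jdm2: "joint_density f n \<in> borel_measurable (lborel \<Otimes>\<^sub>M lborel)"
  proof -
    have "(\<lambda>p. ennreal (4 * snd p / (2*pi)^n) * (\<integral>\<^sup>+x. \<integral>\<^sup>+\<xi>. Gfun n f p x \<xi> \<partial>PiM {..<n-1} (\<lambda>_. lborel) \<partial>PiM {..<n-1} (\<lambda>_. lborel))) \<in> borel_measurable (lborel \<Otimes>\<^sub>M lborel)"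
      using I2 by measurable
    then show ?thesis by (simp add: jd_eq[abs_def])
  qed
  have jdm: "joint_density f n \<in> borel_measurable lborel" using jdm2 by (simp add: lborel_prod)
  have "distr M lborel X = density lborel (joint_density f n)"
  proof (rule measure_eqI)
    show "sets (distr M lborel X) = sets (density lborel (joint_density f n))" by simp
    fix B assume "B \<in> sets (distr M lborel X)"
    then have B: "B \<in> sets lborel" by simp
    then have B2: "B \<in> sets (lborel \<Otimes>\<^sub>M lborel :: (real \<times> real) measure)" unfolding lborel_prod .
    have hm: "indicator B \<in> borel_measurable (lborel \<Otimes>\<^sub>M lborel :: (real \<times> real) measure)"
      by (rule borel_measurable_indicator[OF B2])
    have "emeasure (distr M lborel X) B = (\<integral>\<^sup>+p. indicator B p \<partial>distr M lborel X)"
      by (rule nn_integral_indicator[symmetric]) (use B in simp)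
    also have "\<dots> = (\<integral>\<^sup>+\<omega>. indicator B (X \<omega>) \<partial>M)"
      by (rule nn_integral_distr[OF Xm]) (use B in simp)
    also have "\<dots> = (\<integral>\<^sup>+p. joint_density f n p * indicator B p \<partial>(lborel \<Otimes>\<^sub>M lborel))"
      unfolding X_def by (rule trans[OF PL(2)[OF A hm] main_analytic[OF A(2) A(3) fm' hm, symmetric]])
    also have "\<dots> = (\<integral>\<^sup>+p. joint_density f n p * indicator B p \<partial>lborel)"
      by (simp add: lborel_prod)
    also have "\<dots> = emeasure (density lborel (joint_density f n)) B"
      by (rule emeasure_density[symmetric, OF jdm B])
    finally show "emeasure (distr M lborel X) B = emeasure (density lborel (joint_density f n)) B" .
  qed
  then show ?thesis
    unfolding distributed_def X_def[abs_def] using jdm Xm[unfolded X_def[abs_def]] by simp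
qed

end
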